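(* Let $g\in\mathcal M_K$ be given by $g=\beta Q|_{\mathfrak p}+\alpha_1Q|_{\mathfrak k_1}+\cdots+\alpha_{r+s}Q|_{\mathfrak k_{r+s}}$ with $\beta,\alpha_1,\dots,\alpha_{r+s}>0$. Then the Ricci curvature of $g$ satisfies $$\mathrm{Ric}(g)|_{\mathfrak p}=-\sum_{i=1}^{r+s}\Big(\frac{\alpha_i}{2\beta}+1\Big)\frac{d_i(1-\kappa_i)}{n}\,Q|_{\mathfrak p},\qquad \mathrm{Ric}(g)|_{\mathfrak k_j}=\frac14\Big(\frac{\alpha_j^2}{\beta^2}(1-\kappa_j)+\kappa_j\Big)Q|_{\mathfrak k_j},$$ and $\mathrm{Ric}(g)(\mathfrak p,\mathfrak k_j)=0$, $\mathrm{Ric}(g)(\mathfrak k_j,\mathfrak k_k)=0$ for all $j,k\in\{1,\dots,r+s\}$ with $j\ne k$.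
   Context: Let $G$ be a connected non-compact simple Lie group with Lie algebra $\mathfrak g$, $K$ a maximal compact subgroup with Lie algebra $\mathfrak k$, $B$ the Killing form of $\mathfrak g$, and $\mathfrak p$ the $B$-orthogonal complement of $\mathfrak k$ in $\mathfrak g$ (a Cartan decomposition $\mathfrak g=\mathfrak p\oplus\mathfrak k$). Let $Q=B|_{\mathfrak p}-B|_{\mathfrak k}$, an inner product on $\mathfrak g$. Write $\mathfrak k=\mathfrak k_1\oplus\cdots\oplus\mathfrak k_{r+s}$, where $\mathfrak k_1,\dots,\mathfrak k_r$ are the simple ideals of $[\mathfrak k,\mathfrak k]$, $\mathfrak k_{r+1}$ is the centre of $\mathfrak k$, and $s=1$ if the centre is nontrivial, $s=0$ otherwise. Let $n=\dim\mathfrak p$, $d_i=\dim\mathfrak k_i$, and define $\kappa_i$ by $B_i=\kappa_iB|_{\mathfrak k_i}$ where $B_i$ is the Killing form of $\mathfrak k_i$. Left-invariant $(0,2)$-tensor fields on $G$ are identified with bilinear forms on $\mathfrak g$; for a subspace $\mathfrak u\in\{\mathfrak p,\mathfrak k_1,\dots,\mathfrak k_{r+s}\}$, $Q|_{\mathfrak u}$ denotes the restriction of $Q$ to $\mathfrak u$, extended by zero on the $Q$-orthogonal complement when viewed as a form on $\mathfrak g$. $\mathcal M_K$ is the set of left-invariant metrics on $G$ that are naturally reductive with respect to $G\times K$ (acting on $G$ by $(x,k)y=xyk^{-1}$); by a theorem of Gordon these are exactly the metrics of the form $\beta Q|_{\mathfrak p}+\sum_i\alpha_iQ|_{\mathfrak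 k_i}$ with all coefficients positive. *)

theory Defs
  imports "HOL-Analysis.Analysis"
begin

text \<open>A finite-dimensional real Lie algebra is modelled as a type 'a of class
euclidean_space (used only as a finite-dimensional real vector space; its inner
product plays no role) together with a bracket br.\<close>

definition lie_bracket :: "('a::real_vector \<Rightarrow> 'a \<Rightarrow> 'a) \<Rightarrow> bool" where
  "lie_bracket br \<longleftrightarrow> bilinear br \<and> (\<forall>X. br X X = 0) \<and>
     (\<forall>X Y Z. br X (br Y Z) + br Y (br Z X) + br Z (br X Y) = 0)"

text \<open>Trace of a linear endomorphism f of a finite-dimensional subspace V
(f V \<subseteq> V), computed in an (arbitrarily chosen) basis of V.\<close>
definition trace_on :: "'a::euclidean_space set \<Rightarrow> ('a \<Rightarrow> 'a) \<Rightarrow> real" where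
  "trace_on V f = (let b = (SOME b. b \<subseteq> V \<and> independent b \<and> span b = V)
                   in \<Sum>x\<in>b. representation b (f x) x)"

definition killing_on :: "('a::euclidean_space \<Rightarrow> 'a \<Rightarrow> 'a) \<Rightarrow> 'a set \<Rightarrow> 'a \<Rightarrow> 'a \<Rightarrow> real" where
  "killing_on br h X Y = trace_on h (\<lambda>Z. br X (br Y Z))"

abbreviation killing :: "('a::euclidean_space \<Rightarrow> 'a \<Rightarrow> 'a) \<Rightarrow> 'a \<Rightarrow> 'a \<Rightarrow> real" where
  "killing br \<equiv> killing_on br UNIV"

definition ideal_of :: "('a::real_vector \<Rightarrow> 'a \<Rightarrow> 'a) \<Rightarrow> 'a set \<Rightarrow> 'a set \<Rightarrow> bool" where
  "ideal_of br h I \<longleftrightarrow> subspace I \<and> I \<subseteq> h \<and> (\<forall>X\<in>h. \<forall>Y\<in>I. br X Y \<in> I)"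

definition simple_alg :: "('a::real_vector \<Rightarrow> 'a \<Rightarrow> 'a) \<Rightarrow> 'a set \<Rightarrow> bool" where
  "simple_alg br I \<longleftrightarrow> (\<exists>X\<in>I. \<exists>Y\<in>I. br X Y \<noteq> 0) \<and>
     (\<forall>J. ideal_of br I J \<longrightarrow> J = {0} \<or> J = I)"

definition simple_ideal_of :: "('a::real_vector \<Rightarrow> 'a \<Rightarrow> 'a) \<Rightarrow> 'a set \<Rightarrow> 'a set \<Rightarrow> bool" where
  "simple_ideal_of br h I \<longleftrightarrow> ideal_of br h I \<and> simple_alg br I"

definition derived_alg :: "('a::real_vector \<Rightarrow> 'a \<Rightarrow> 'a) \<Rightarrow> 'a set \<Rightarrow> 'a set" where
  "derived_alg br h = span {br X Y | X Y. X \<in> h \<and> Y \<in> h}"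

definition centre :: "('a::real_vector \<Rightarrow> 'a \<Rightarrow> 'a) \<Rightarrow> 'a set \<Rightarrow> 'a set" where
  "centre br h = {X \<in> h. \<forall>Y\<in>h. br X Y = 0}"

definition cartan_involution :: "('a::euclidean_space \<Rightarrow> 'a \<Rightarrow> 'a) \<Rightarrow> ('a \<Rightarrow> 'a) \<Rightarrow> bool" where
  "cartan_involution br \<theta> \<longleftrightarrow> linear \<theta> \<and> (\<forall>X. \<theta> (\<theta> X) = X) \<and>
     (\<forall>X Y. \<theta> (br X Y) = br (\<theta> X) (\<theta> Y)) \<and>
     (\<forall>X. X \<noteq> 0 \<longrightarrow> - killing br X (\<theta> X) > 0)"

definition kpart :: "('a::real_vector \<Rightarrow> 'a) \<Rightarrow> 'a set" where
  "kpart \<theta> = {X. \<theta> X = X}"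
definition ppart :: "('a::real_vector \<Rightarrow> 'a) \<Rightarrow> 'a set" where
  "ppart \<theta> = {X. \<theta> X = - X}"

text \<open>Q = B|_p - B|_k (components taken along g = p + k).\<close>
definition Qform :: "('a::euclidean_space \<Rightarrow> 'a \<Rightarrow> 'a) \<Rightarrow> ('a \<Rightarrow> 'a) \<Rightarrow> 'a \<Rightarrow> 'a \<Rightarrow> real" where
  "Qform br \<theta> X Y =
     killing br ((1/2) *\<^sub>R (X - \<theta> X)) ((1/2) *\<^sub>R (Y - \<theta> Y))
     - killing br ((1/2) *\<^sub>R (X + \<theta> X)) ((1/2) *\<^sub>R (Y + \<theta> Y))"

text \<open>Orthogonal projection onto u w.r.t. a bilinear form Q, and the restriction
Q|_u extended by zero on the Q-orthogonal complement of u.\<close>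
definition form_proj :: "('a::real_vector \<Rightarrow> 'a \<Rightarrow> real) \<Rightarrow> 'a set \<Rightarrow> 'a \<Rightarrow> 'a" where
  "form_proj Q u X = (THE y. y \<in> u \<and> (\<forall>z\<in>u. Q (X - y) z = 0))"

definition form_restr :: "('a::real_vector \<Rightarrow> 'a \<Rightarrow> real) \<Rightarrow> 'a set \<Rightarrow> 'a \<Rightarrow> 'a \<Rightarrow> real" where
  "form_restr Q u X Y = Q (form_proj Q u X) (form_proj Q u Y)"

text \<open>Levi-Civita connection, curvature and Ricci tensor of the left-invariant
metric g on a Lie group with Lie algebra (UNIV, br), evaluated on left-invariant
vector fields (Koszul formula).\<close>
definition lc_conn :: "('a::euclidean_space \<Rightarrow> 'a \<Rightarrow> real) \<Rightarrow> ('a \<Rightarrow> 'a \<Rightarrow> 'a) \<Rightarrow> 'a \<Rightarrow> 'a \<Rightarrow> 'a" where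
  "lc_conn g br X Y = (THE W. \<forall>Z. g W Z =
      (1/2) * (g (br X Y) Z - g (br Y Z) X + g (br Z X) Y))"

definition curv :: "('a::euclidean_space \<Rightarrow> 'a \<Rightarrow> real) \<Rightarrow> ('a \<Rightarrow> 'a \<Rightarrow> 'a) \<Rightarrow> 'a \<Rightarrow> 'a \<Rightarrow> 'a \<Rightarrow> 'a" where
  "curv g br X Y Z = lc_conn g br X (lc_conn g br Y Z) - lc_conn g br Y (lc_conn g br X Z)
                     - lc_conn g br (br X Y) Z"

definition ricci :: "('a::euclidean_space \<Rightarrow> 'a \<Rightarrow> real) \<Rightarrow> ('a \<Rightarrow> 'a \<Rightarrow> 'a) \<Rightarrow> 'a \<Rightarrow> 'a \<Rightarrow> real" where
  "ricci g br X Y = trace_on UNIV (\<lambda>Z. curv g br Z X Y)"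

end

theory Submission
  imports Defs
begin

definition onb :: "('a::euclidean_space \<Rightarrow> 'a \<Rightarrow> real) \<Rightarrow> 'a set \<Rightarrow> 'a set \<Rightarrow> bool" where
  "onb Q V b \<longleftrightarrow> finite b \<and> b \<subseteq> V \<and> span b = V \<and> (\<forall>e\<in>b. Q e e = 1) \<and>
     (\<forall>e\<in>b. \<forall>e'\<in>b. e \<noteq> e' \<longrightarrow> Q e e' = 0)"

locale ipf =
  fixes Q :: "'a::euclidean_space \<Rightarrow> 'a \<Rightarrow> real"
  assumes bil: "bilinear Q"
    and sym: "Q x y = Q y x"
    and pos: "x \<noteq> 0 \<Longrightarrow> Q x x > 0"
begin

lemma ladd: "Q (x + y) z = Q x z + Q y z" using bilinear_ladd[OF bil] .
lemma radd: "Q x (y + z) = Q x y + Q x z" using bilinear_radd[OF bil] .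
lemma lmul: "Q (c *\<^sub>R x) y = c * Q x y" using bilinear_lmul[OF bil] by simp
lemma rmul: "Q x (c *\<^sub>R y) = c * Q x y" using bilinear_rmul[OF bil] by simp
lemma lneg: "Q (- x) y = - Q x y" using bilinear_lneg[OF bil] .
lemma rneg: "Q x (- y) = - Q x y" using bilinear_rneg[OF bil] .
lemma lsub: "Q (x - y) z = Q x z - Q y z" using bilinear_lsub[OF bil] .
lemma rsub: "Q z (x - y) = Q z x - Q z y" using bilinear_rsub[OF bil] .
lemma lzero: "Q 0 x = 0" using bilinear_lzero[OF bil] .
lemma rzero: "Q x 0 = 0" using bilinear_rzero[OF bil] .
lemma lsum: "Q (sum f S) y = (\<Sum>i\<in>S. Q (f i) y)"
proof -
  interpret l: linear "\<lambda>x. Q x y" using bil by (simp add: bilinear_def)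
  show ?thesis by (simp add: l.sum)
qed
lemma rsum: "Q y (sum f S) = (\<Sum>i\<in>S. Q y (f i))"
  using lsum[of f S y] by (simp add: sym)

lemmas Qsimps = ladd radd lmul rmul lneg rneg lsub rsub lzero rzero lsum rsum

lemma nonneg: "Q x x \<ge> 0"
  using pos[of x] by (cases "x = 0") (auto simp: lzero)

lemma zero_iff: "Q x x = 0 \<longleftrightarrow> x = 0"
  by (metis lzero less_irrefl pos)

lemma eq_zeroI: "(\<And>y. Q x y = 0) \<Longrightarrow> x = 0"
  using zero_iff by blast

lemma onb_orth: "onb Q V b \<Longrightarrow> e \<in> b \<Longrightarrow> e' \<in> b \<Longrightarrow> e \<noteq> e' \<Longrightarrow> Q e e' = 0"
  by (auto simp: onb_def)
lemma onb_norm: "onb Q V b \<Longrightarrow> e \<in> b \<Longrightarrow> Q e e = 1"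
  by (auto simp: onb_def)

lemma onb_indep:
  assumes "onb Q V b" shows "independent b"
proof
  assume "dependent b"
  then obtain t u where t: "finite t" "t \<subseteq> b" and s: "(\<Sum>v\<in>t. u v *\<^sub>R v) = 0"
    and v: "\<exists>v\<in>t. u v \<noteq> 0"
    unfolding dependent_explicit by blast
  then obtain v where "v \<in> t" "u v \<noteq> 0" by blast
  have "Q (\<Sum>w\<in>t. u w *\<^sub>R w) v = (\<Sum>w\<in>t. u w * Q w v)" by (simp add: Qsimps)
  also have "\<dots> = u v * Q v v"
  proof -
    have "\<forall>w\<in>t - {v}. u w * Q w v = 0"
      using assms t \<open>v \<in> t\<close> onb_orth[OF assms] by (metis DiffE insertI1 mult_zero_right subsetD)
    then have "(\<Sum>w\<in>t - {v}. u w * Q w v) = 0" by (intro sum.neutral) auto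
    then show ?thesis by (simp add: sum.remove[OF t(1) \<open>v \<in> t\<close>])
  qed
  also have "\<dots> = u v" using assms t \<open>v \<in> t\<close> by (auto simp: onb_def)
  finally show False using s \<open>u v \<noteq> 0\<close> by (simp add: lzero)
qed

lemma onb_Q_sum:
  assumes "onb Q V b" "e \<in> b"
  shows "Q (\<Sum>e'\<in>b. c e' *\<^sub>R e') e = c e"
proof -
  have "Q (\<Sum>e'\<in>b. c e' *\<^sub>R e') e = (\<Sum>e'\<in>b. c e' * Q e' e)" by (simp add: Qsimps)
  also have "\<dots> = c e * Q e e"
    by (rule sum.remove[THEN trans, of b e]) (use assms onb_orth[OF assms(1)] in \<open>auto simp: onb_def intro!: sum.neutral\<close>)
  also have "\<dots> = c e" using assms by (auto simp: onb_def)
  finally show ?thesis .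
qed

lemma onb_expand:
  assumes "onb Q V b" "x \<in> V"
  shows "x = (\<Sum>e\<in>b. Q x e *\<^sub>R e)"
proof -
  have fin: "finite b" and sp: "span b = V" using assms by (auto simp: onb_def)
  then obtain c where c: "x = (\<Sum>e\<in>b. c e *\<^sub>R e)"
    using assms(2) span_finite[OF fin] by auto
  have "Q x e = c e" if "e \<in> b" for e using onb_Q_sum[OF assms(1) that] c by simp
  then show ?thesis using c by (auto intro!: sum.cong)
qed

lemma onb_Q_expand:
  assumes "onb Q V b" "x \<in> V"
  shows "Q x y = (\<Sum>e\<in>b. Q x e * Q e y)"
  by (subst onb_expand[OF assms]) (simp add: Qsimps)

lemma onb_Q_expand2:
  assumes "onb Q V b" "y \<in> V"
  shows "Q x y = (\<Sum>e\<in>b. Q x e * Q y e)"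
  using onb_Q_expand[OF assms, of x] by (simp add: sym mult.commute)

lemma onb_rep:
  assumes "onb Q V b" "v \<in> V"
  shows "representation b v e = (if e \<in> b then Q v e else 0)"
proof -
  have ind: "independent b" using onb_indep[OF assms(1)] .
  have fin: "finite b" and sp: "span b = V" using assms by (auto simp: onb_def)
  have "v = (\<Sum>e\<in>b. representation b v e *\<^sub>R e)"
    using sum_representation_eq[OF ind _ fin] assms(2) sp by auto
  then have "Q v e = representation b v e" if "e \<in> b" for e
    using onb_Q_sum[OF assms(1) that, of "representation b v"] by simp
  then show ?thesis using representation_ne_zero[of b v e] by auto
qed

lemma onb_exists_aux:
  "\<forall>V. subspace V \<and> dim V = n \<longrightarrow> (\<exists>b. onb Q V b)"
proof (induction n rule: less_induct)
  case (less n)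
  show ?case
  proof (intro allI impI)
    fix V :: "'a set" assume V: "subspace V \<and> dim V = n"
    show "\<exists>b. onb Q V b"
    proof (cases "V = {0}")
      case True
      then show ?thesis by (auto simp: onb_def)
    next
      case False
      then obtain v where v: "v \<in> V" "v \<noteq> 0" using V subspace_0 by blast
      define e where "e = (1 / sqrt (Q v v)) *\<^sub>R v"
      have Qv: "Q v v > 0" using pos v by auto
      have Qe: "Q e e = 1" using Qv by (simp add: e_def Qsimps real_sqrt_mult[symmetric] flip: power2_eq_square)
      have eV: "e \<in> V" using v V by (simp add: e_def subspace_scale)
      define W where "W = {x \<in> V. Q x e = 0}"
      have sW: "subspace W"
        using V unfolding W_def subspace_def by (auto simp: Qsimps)
      have "e \<notin> W" using Qe by (simp add: W_def)
      then have WV: "W \<subset> V" using eV by (auto simp: W_def)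
      have "span W = W" "span V = V" using sW V by (auto simp: span_eq_iff)
      then have "dim W < dim V"
        using dim_psubset[of W V] WV by (simp only:)
      then obtain bW where bW: "onb Q W bW" using less.IH V sW by blast
      define b where "b = insert e bW"
      have "onb Q V b"
        unfolding onb_def
      proof (intro conjI ballI impI)
        show "finite b" using bW by (simp add: b_def onb_def)
        show "b \<subseteq> V" using bW eV WV by (auto simp: b_def onb_def)
        show "span b = V"
        proof
          show "span b \<subseteq> V" using \<open>b \<subseteq> V\<close> V by (simp add: span_minimal)
          show "V \<subseteq> span b"
          proof
            fix x assume x: "x \<in> V"
            have "x - Q x e *\<^sub>R e \<in> W"
              using x eV V Qe by (auto simp: W_def Qsimps subspace_diff subspace_scale)
            then have "x - Q x e *\<^sub>R e \<in> span bW" using bW by (simp add: onb_def)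
            then have "x - Q x e *\<^sub>R e \<in> span b" using span_mono[of bW b] by (auto simp: b_def)
            moreover have "Q x e *\<^sub>R e \<in> span b" by (simp add: b_def span_base span_scale)
            ultimately have "(x - Q x e *\<^sub>R e) + Q x e *\<^sub>R e \<in> span b" using span_add by blast
            then show "x \<in> span b" by simp
          qed
        qed
        show "Q e' e' = 1" if "e' \<in> b" for e' using that Qe bW by (auto simp: b_def onb_def)
        show "Q e1 e2 = 0" if "e1 \<in> b" "e2 \<in> b" "e1 \<noteq> e2" for e1 e2
          using that bW by (auto simp: b_def onb_def W_def sym)
      qed
      then show ?thesis by blast
    qed
  qed
qed

lemma onb_exists: "subspace V \<Longrightarrow> \<exists>b. onb Q V b"
  using onb_exists_aux by blast

lemma onb_card: "onb Q V b \<Longrightarrow> card b = dim V"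
  using onb_indep[of V b] dim_span_eq_card_independent[of b] by (auto simp: onb_def)

lemma onb_subspace: "onb Q V b \<Longrightarrow> subspace V"
proof -
  assume "onb Q V b"
  then have "span b = V" by (simp add: onb_def)
  then show "subspace V" using subspace_span[of b] by simp
qed

lemma trace_onb:
  assumes b: "onb Q V b" and f: "linear f" and fV: "\<And>x. x \<in> V \<Longrightarrow> f x \<in> V"
  shows "trace_on V f = (\<Sum>e\<in>b. Q (f e) e)"
proof -
  have sV: "subspace V" using onb_subspace[OF b] .
  define b0 where "b0 = (SOME b. b \<subseteq> V \<and> independent b \<and> span b = V)"
  have "\<exists>b. b \<subseteq> V \<and> independent b \<and> span b = V"
    using b onb_indep[OF b] by (auto simp: onb_def)
  then have b0: "b0 \<subseteq> V" "independent b0" "span b0 = V"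
    unfolding b0_def by (metis (mono_tags, lifting) someI_ex)+
  have fin0: "finite b0" using b0 finiteI_independent by blast
  have fin: "finite b" using b by (simp add: onb_def)
  have bV: "b \<subseteq> V" using b by (simp add: onb_def)
  interpret f: linear f by fact
  have tr: "trace_on V f = (\<Sum>x\<in>b0. representation b0 (f x) x)"
    by (simp add: trace_on_def b0_def Let_def)
  have "representation b0 (f x) x = (\<Sum>e\<in>b. Q (f x) e * representation b0 e x)" if x: "x \<in> b0" for x
  proof -
    have fx: "f x \<in> V" using fV b0 x by auto
    have "representation b0 (f x) = representation b0 (\<Sum>e\<in>b. Q (f x) e *\<^sub>R e)"
      using onb_expand[OF b fx] by simp
    also have "\<dots> = (\<lambda>y. \<Sum>e\<in>b. representation b0 (Q (f x) e *\<^sub>R e) y)"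
      by (rule representation_sum[OF b0(2)]) (use bV b0 in \<open>auto intro: span_scale span_base\<close>)
    also have "\<dots> = (\<lambda>y. \<Sum>e\<in>b. Q (f x) e * representation b0 e y)"
      using bV b0 by (auto intro!: ext sum.cong simp: representation_scale[OF b0(2)])
    finally show ?thesis by simp
  qed
  then have "trace_on V f = (\<Sum>x\<in>b0. \<Sum>e\<in>b. Q (f x) e * representation b0 e x)"
    by (simp add: tr)
  also have "\<dots> = (\<Sum>e\<in>b. \<Sum>x\<in>b0. representation b0 e x * Q (f x) e)"
    by (subst sum.swap) (simp add: mult.commute)
  also have "\<dots> = (\<Sum>e\<in>b. Q (f e) e)"
  proof (rule sum.cong[OF refl])
    fix e assume e: "e \<in> b"
    have eq: "e = (\<Sum>x\<in>b0. representation b0 e x *\<^sub>R x)"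
      using sum_representation_eq[OF b0(2) _ fin0] e bV b0 by auto
    have "Q (f e) e = Q (\<Sum>x\<in>b0. representation b0 e x *\<^sub>R f x) e"
      by (subst eq) (simp add: f.sum f.scale)
    also have "\<dots> = (\<Sum>x\<in>b0. representation b0 e x * Q (f x) e)" by (simp add: Qsimps)
    finally show "(\<Sum>x\<in>b0. representation b0 e x * Q (f x) e) = Q (f e) e" by simp
  qed
  finally show ?thesis .
qed

end

lemma ipf_inner: "ipf (\<bullet>)"
  by unfold_locales (auto simp: bilinear_def inner_commute intro!: linearI simp: inner_add_left inner_add_right)

lemma onb_Basis: "onb (\<bullet>) UNIV Basis"
  by (auto simp: onb_def inner_not_same_Basis)

lemma trace_UNIV_Basis:
  assumes "linear f"
  shows "trace_on UNIV f = (\<Sum>e\<in>Basis. f e \<bullet> e)"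
  using ipf.trace_onb[OF ipf_inner onb_Basis assms] by simp

definition trB :: "('a::euclidean_space \<Rightarrow> 'a) \<Rightarrow> real" where
  "trB f = (\<Sum>b\<in>Basis. f b \<bullet> b)"

lemma trB_comm:
  fixes f h :: "'a::euclidean_space \<Rightarrow> 'a"
  assumes f: "linear f" and h: "linear h"
  shows "trB (\<lambda>x. f (h x)) = trB (\<lambda>x. h (f x))"
proof -
  interpret f: linear f by fact
  interpret h: linear h by fact
  have "trB (\<lambda>x. f (h x)) = (\<Sum>b\<in>Basis. \<Sum>c\<in>Basis. (h b \<bullet> c) * (f c \<bullet> b))"
    unfolding trB_def
  proof (rule sum.cong[OF refl])
    fix b :: 'a
    have "f (h b) = f (\<Sum>c\<in>Basis. (h b \<bullet> c) *\<^sub>R c)" by (simp add: euclidean_representation)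
    also have "\<dots> = (\<Sum>c\<in>Basis. (h b \<bullet> c) *\<^sub>R f c)" by (simp add: f.sum f.scale)
    finally show "f (h b) \<bullet> b = (\<Sum>c\<in>Basis. (h b \<bullet> c) * (f c \<bullet> b))"
      by (simp add: inner_sum_left)
  qed
  also have "\<dots> = (\<Sum>c\<in>Basis. \<Sum>b\<in>Basis. (f c \<bullet> b) * (h b \<bullet> c))"
    by (subst sum.swap) (simp add: mult.commute)
  also have "\<dots> = trB (\<lambda>x. h (f x))"
    unfolding trB_def
  proof (rule sum.cong[OF refl])
    fix c :: 'a
    have "h (f c) = h (\<Sum>b\<in>Basis. (f c \<bullet> b) *\<^sub>R b)" by (simp add: euclidean_representation)
    also have "\<dots> = (\<Sum>b\<in>Basis. (f c \<bullet> b) *\<^sub>R h b)" by (simp add: h.sum h.scale)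
    finally show "(\<Sum>b\<in>Basis. (f c \<bullet> b) * (h b \<bullet> c)) = h (f c) \<bullet> c"
      by (simp add: inner_sum_left)
  qed
  finally show ?thesis .
qed

lemma trB_add: "trB (\<lambda>x. f x + g x) = trB f + trB g"
  by (simp add: trB_def inner_add_left sum.distrib)
lemma trB_diff: "trB (\<lambda>x. f x - g x) = trB f - trB g"
  by (simp add: trB_def inner_diff_left sum_subtractf)
lemma trB_scale: "trB (\<lambda>x. c *\<^sub>R f x) = c * trB f"
  by (simp add: trB_def sum_distrib_left)

locale lie =
  fixes br :: "'a::euclidean_space \<Rightarrow> 'a \<Rightarrow> 'a"
  assumes lie: "lie_bracket br"
begin

lemma bil: "bilinear br" using lie by (simp add: lie_bracket_def)
lemma alt: "br X X = 0" using lie by (simp add: lie_bracket_def)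
lemma jacobi: "br X (br Y Z) + br Y (br Z X) + br Z (br X Y) = 0"
  using lie by (simp add: lie_bracket_def)

lemma ladd: "br (x + y) z = br x z + br y z" using bilinear_ladd[OF bil] .
lemma radd: "br x (y + z) = br x y + br x z" using bilinear_radd[OF bil] .
lemma lmul: "br (c *\<^sub>R x) y = c *\<^sub>R br x y" using bilinear_lmul[OF bil] .
lemma rmul: "br x (c *\<^sub>R y) = c *\<^sub>R br x y" using bilinear_rmul[OF bil] .
lemma lneg: "br (- x) y = - br x y" using bilinear_lneg[OF bil] .
lemma rneg: "br x (- y) = - br x y" using bilinear_rneg[OF bil] .
lemma lsub: "br (x - y) z = br x z - br y z" using bilinear_lsub[OF bil] .
lemma rsub: "br z (x - y) = br z x - br z y" using bilinear_rsub[OF bil] .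
lemma lzero: "br 0 x = 0" using bilinear_lzero[OF bil] .
lemma rzero: "br x 0 = 0" using bilinear_rzero[OF bil] .
lemma lsum: "br (sum f S) y = (\<Sum>i\<in>S. br (f i) y)"
proof -
  interpret l: linear "\<lambda>x. br x y" using bil by (simp add: bilinear_def)
  show ?thesis by (simp add: l.sum)
qed
lemma rsum: "br y (sum f S) = (\<Sum>i\<in>S. br y (f i))"
proof -
  interpret l: linear "\<lambda>x. br y x" using bil by (simp add: bilinear_def)
  show ?thesis by (simp add: l.sum)
qed
lemmas brsimps = ladd radd lmul rmul lneg rneg lsub rsub lzero rzero lsum rsum

lemma anti: "br Y X = - br X Y"
proof -
  have "br (X + Y) (X + Y) = br X X + br X Y + (br Y X + br Y Y)" by (simp add: ladd radd)
  then have "br X Y + br Y X = 0" by (simp add: alt)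
  then show ?thesis by (simp add: eq_neg_iff_add_eq_0 add.commute)
qed

lemma jacobi2: "br X (br Y Z) = br (br X Y) Z + br Y (br X Z)"
proof -
  have "br X (br Y Z) + - br Y (br X Z) + - br (br X Y) Z = 0"
    using jacobi[of X Y Z] unfolding anti[of Z X] anti[of Z "br X Y"] rneg .
  moreover have "br X (br Y Z) - (br (br X Y) Z + br Y (br X Z)) = br X (br Y Z) + - br Y (br X Z) + - br (br X Y) Z"
    by (simp add: algebra_simps)
  ultimately show ?thesis by simp
qed

lemma lin_ad: "linear (br X)" using bil by (simp add: bilinear_def)
lemma lin_adr: "linear (\<lambda>Y. br Y X)" using bil by (simp add: bilinear_def)
lemma lin_adad: "linear (\<lambda>Z. br X (br Y Z))"
  using linear_compose[OF lin_ad[of Y] lin_ad[of X]] by (simp add: o_def)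

lemma killing_trB: "killing br X Y = trB (\<lambda>Z. br X (br Y Z))"
  unfolding killing_on_def trB_def using trace_UNIV_Basis[OF lin_adad] .

lemma killing_sym: "killing br X Y = killing br Y X"
  unfolding killing_trB by (rule trB_comm[OF lin_ad lin_ad])

lemma killing_bil: "bilinear (killing br)"
  unfolding bilinear_def killing_trB
  by (auto intro!: linearI simp: brsimps trB_add trB_scale)

lemma brbr: "br (br X Y) W = br X (br Y W) - br Y (br X W)"
  using jacobi2[of X Y W] by (simp add: algebra_simps)

lemma killing_inv: "killing br (br X Y) Z = killing br X (br Y Z)"
proof -
  have "killing br (br X Y) Z = trB (\<lambda>W. br X (br Y (br Z W)) - br Y (br X (br Z W)))"
    unfolding killing_trB by (simp only: brbr)
  also have "\<dots> = trB (\<lambda>W. br X (br Y (br Z W))) - trB (\<lambda>W. br Y (br X (br Z W)))"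
    by (rule trB_diff)
  finally have 1: "killing br (br X Y) Z = trB (\<lambda>W. br X (br Y (br Z W))) - trB (\<lambda>W. br Y (br X (br Z W)))" .
  have "killing br X (br Y Z) = trB (\<lambda>W. br X (br Y (br Z W)) - br X (br Z (br Y W)))"
    unfolding killing_trB by (simp only: brbr rsub)
  also have "\<dots> = trB (\<lambda>W. br X (br Y (br Z W))) - trB (\<lambda>W. br X (br Z (br Y W)))"
    by (rule trB_diff)
  finally have 2: "killing br X (br Y Z) = trB (\<lambda>W. br X (br Y (br Z W))) - trB (\<lambda>W. br X (br Z (br Y W)))" .
  have "trB (\<lambda>W. br Y (br X (br Z W))) = trB (\<lambda>W. br X (br Z (br Y W)))"
    using trB_comm[OF lin_ad[of Y] linear_compose[OF lin_ad[of Z] lin_ad[of X]]] by (simp add: o_def)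
  then show ?thesis using 1 2 by simp
qed

end

locale cartan = lie +
  fixes \<theta> :: "'a::euclidean_space \<Rightarrow> 'a"
  assumes cart: "cartan_involution br \<theta>"
begin

lemma th_lin: "linear \<theta>" using cart by (simp add: cartan_involution_def)
lemma th_th[simp]: "\<theta> (\<theta> X) = X" using cart by (simp add: cartan_involution_def)
lemma th_br: "\<theta> (br X Y) = br (\<theta> X) (\<theta> Y)" using cart by (simp add: cartan_involution_def)
lemma th_pos: "X \<noteq> 0 \<Longrightarrow> - killing br X (\<theta> X) > 0" using cart by (simp add: cartan_involution_def)

lemma th_add: "\<theta> (x + y) = \<theta> x + \<theta> y" using th_lin by (simp add: linear_add)
lemma th_sub: "\<theta> (x - y) = \<theta> x - \<theta> y" using th_lin by (simp add: linear_diff)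
lemma th_scale: "\<theta> (c *\<^sub>R x) = c *\<^sub>R \<theta> x" using th_lin by (simp add: linear_scale)
lemma th_neg: "\<theta> (- x) = - \<theta> x" using th_lin by (simp add: linear_neg)
lemma th_zero: "\<theta> 0 = 0" using th_lin by (simp add: linear_0)

abbreviation "B \<equiv> killing br"
abbreviation "Q \<equiv> Qform br \<theta>"

lemmas Bsimps = bilinear_ladd[OF killing_bil] bilinear_radd[OF killing_bil]
  bilinear_lmul[OF killing_bil] bilinear_rmul[OF killing_bil]
  bilinear_lneg[OF killing_bil] bilinear_rneg[OF killing_bil]
  bilinear_lsub[OF killing_bil] bilinear_rsub[OF killing_bil]

lemma killing_th: "B (\<theta> X) (\<theta> Y) = B X Y"
proof -
  have ad: "br (\<theta> X) Z = \<theta> (br X (\<theta> Z))" for X Z by (simp add: th_br)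
  have "B (\<theta> X) (\<theta> Y) = trB (\<lambda>Z. \<theta> (br X (br Y (\<theta> Z))))"
    unfolding killing_trB by (simp add: ad)
  also have "\<dots> = trB (\<lambda>Z. br X (br Y (\<theta> (\<theta> Z))))"
    using trB_comm[OF th_lin linear_compose[OF th_lin lin_adad[of X Y]]] by (simp add: o_def)
  also have "\<dots> = B X Y" by (simp add: killing_trB)
  finally show ?thesis .
qed

lemma Q_eq: "Q X Y = - B X (\<theta> Y)"
proof -
  have "B (\<theta> X) Y = B X (\<theta> Y)" using killing_th[of X "\<theta> Y"] by simp
  then show ?thesis
    unfolding Qform_def by (simp add: Bsimps th_add th_sub th_scale algebra_simps)
qed

lemma Q_ipf: "ipf Q"
proof
  show "bilinear Q"
    unfolding bilinear_def Q_eq by (auto intro!: linearI simp: Bsimps th_add th_scale)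
  show "Q x y = Q y x" for x y
    unfolding Q_eq using killing_th[of x "\<theta> y"] killing_sym by simp
  show "x \<noteq> 0 \<Longrightarrow> 0 < Q x x" for x unfolding Q_eq using th_pos by simp
qed

sublocale Qf: ipf Q by (rule Q_ipf)

abbreviation "kp \<equiv> kpart \<theta>"
abbreviation "pp \<equiv> ppart \<theta>"

lemma in_k: "x \<in> kp \<longleftrightarrow> \<theta> x = x" by (simp add: kpart_def)
lemma in_p: "x \<in> pp \<longleftrightarrow> \<theta> x = - x" by (simp add: ppart_def)

lemma sub_k: "subspace kp"
  unfolding subspace_def kpart_def by (simp add: th_add th_scale th_zero)
lemma sub_p: "subspace pp"
  unfolding subspace_def ppart_def by (simp add: th_add th_scale th_zero)

lemma br_kk: "x \<in> kp \<Longrightarrow> y \<in> kp \<Longrightarrow> br x y \<in> kp" by (simp add: in_k th_br)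
lemma br_kp: "x \<in> kp \<Longrightarrow> y \<in> pp \<Longrightarrow> br x y \<in> pp" by (simp add: in_k in_p th_br rneg)
lemma br_pk: "x \<in> pp \<Longrightarrow> y \<in> kp \<Longrightarrow> br x y \<in> pp" by (simp add: in_k in_p th_br lneg)
lemma br_pp: "x \<in> pp \<Longrightarrow> y \<in> pp \<Longrightarrow> br x y \<in> kp" by (simp add: in_k in_p th_br lneg rneg)

lemma decomp1: "(1/2) *\<^sub>R (x + \<theta> x) \<in> kp"
  unfolding in_k th_scale th_add th_th by (simp add: add.commute)
lemma decomp2: "(1/2) *\<^sub>R (x - \<theta> x) \<in> pp"
  unfolding in_p th_scale th_sub th_th by (simp add: scaleR_diff_right)
lemma decomp3: "x = (1/2) *\<^sub>R (x + \<theta> x) + (1/2) *\<^sub>R (x - \<theta> x)"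
proof -
  have "(1/2) *\<^sub>R (x + \<theta> x) + (1/2) *\<^sub>R (x - \<theta> x) = (1/2) *\<^sub>R ((x + \<theta> x) + (x - \<theta> x))"
    by (simp only: scaleR_add_right)
  also have "(x + \<theta> x) + (x - \<theta> x) = 2 *\<^sub>R x" by (simp add: scaleR_2)
  finally show ?thesis by simp
qed
lemmas decomp = decomp1 decomp2 decomp3

lemma pk_zero: "x \<in> pp \<Longrightarrow> x \<in> kp \<Longrightarrow> x = 0"
proof -
  assume "x \<in> pp" "x \<in> kp"
  then have 1: "\<theta> x = - x" and 2: "\<theta> x = x" unfolding in_k in_p .
  have "x = - x" using 1 unfolding 2 .
  then have "x + x = 0" by (simp only: eq_neg_iff_add_eq_0)
  then have "2 *\<^sub>R x = 0" by (simp only: scaleR_2)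
  then show "x = 0" by simp
qed

lemma Q_p: "y \<in> pp \<Longrightarrow> Q x y = B x y" by (simp add: Q_eq in_p Bsimps)
lemma Q_k: "y \<in> kp \<Longrightarrow> Q x y = - B x y" by (simp add: Q_eq in_k)

lemma Q_pk: "x \<in> pp \<Longrightarrow> y \<in> kp \<Longrightarrow> Q x y = 0"
  using Q_k[of y x] Q_p[of x y] Qf.sym[of x y] killing_sym[of x y] by simp
lemma Q_kp: "x \<in> kp \<Longrightarrow> y \<in> pp \<Longrightarrow> Q x y = 0"
  using Q_pk Qf.sym by metis

lemma Q_krule: "z \<in> kp \<Longrightarrow> Q (br z x) y = - Q x (br z y)"
proof -
  assume z: "z \<in> kp"
  have "Q (br z x) y = - B (br z x) (\<theta> y)" by (simp add: Q_eq)
  also have "\<dots> = B (br x z) (\<theta> y)" by (simp add: anti[of z x] Bsimps)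
  also have "\<dots> = B x (br z (\<theta> y))" by (rule killing_inv)
  also have "br z (\<theta> y) = \<theta> (br z y)" using z by (simp add: th_br in_k)
  finally show ?thesis by (simp add: Q_eq)
qed

lemma Q_prule: "z \<in> pp \<Longrightarrow> Q (br z x) y = Q x (br z y)"
proof -
  assume z: "z \<in> pp"
  have "Q (br z x) y = - B (br z x) (\<theta> y)" by (simp add: Q_eq)
  also have "\<dots> = B (br x z) (\<theta> y)" by (simp add: anti[of z x] Bsimps)
  also have "\<dots> = B x (br z (\<theta> y))" by (rule killing_inv)
  also have "br z (\<theta> y) = - \<theta> (br z y)" using z by (simp add: th_br in_p lneg)
  finally show ?thesis by (simp add: Q_eq Bsimps)
qed

end

lemma subspace_pre: "linear f \<Longrightarrow> subspace S \<Longrightarrow> subspace {x. f x \<in> S}"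
  by (auto simp: subspace_def linear_add linear_scale linear_0)

context ipf
begin

lemma sub_orth: "subspace {x. \<forall>y\<in>S. Q x y = 0}"
  unfolding subspace_def by (auto simp: Qsimps)

lemma orth_span: "(\<And>s. s \<in> S \<Longrightarrow> Q y s = 0) \<Longrightarrow> x \<in> span S \<Longrightarrow> Q y x = 0"
proof -
  assume h: "\<And>s. s \<in> S \<Longrightarrow> Q y s = 0" and x: "x \<in> span S"
  have "subspace {x. Q y x = 0}" unfolding subspace_def by (auto simp: Qsimps)
  then have "span S \<subseteq> {x. Q y x = 0}" using h by (intro span_minimal) auto
  then show ?thesis using x by auto
qed

lemma proj_exists:
  assumes "subspace S" shows "\<exists>s\<in>S. \<forall>y\<in>S. Q (v - s) y = 0"
proof -
  obtain b where b: "onb Q S b" using onb_exists[OF assms] by blast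
  define s where "s = (\<Sum>e\<in>b. Q v e *\<^sub>R e)"
  have fin: "finite b" and bS: "b \<subseteq> S" using b by (auto simp: onb_def)
  have sS: "s \<in> S" unfolding s_def using bS assms
    by (intro subspace_sum subspace_scale) auto
  have "Q (v - s) e = 0" if "e \<in> b" for e
    using onb_Q_sum[OF b that, of "\<lambda>e. Q v e"] by (simp add: s_def Qsimps)
  then have "Q (v - s) y = 0" if "y \<in> S" for y
    using orth_span[of b "v - s" y] that b by (auto simp: onb_def)
  then show ?thesis using sS by blast
qed

lemma orth_self_zero: "x \<in> S \<Longrightarrow> (\<forall>y\<in>S. Q x y = 0) \<Longrightarrow> x = 0"
  using zero_iff by blast

end

locale setting = cartan br \<theta> for br :: "'a::euclidean_space \<Rightarrow> 'a \<Rightarrow> 'a" and \<theta> +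
  fixes kk :: "nat \<Rightarrow> 'a set" and r s :: nat and \<kappa> :: "nat \<Rightarrow> real"
  assumes simple: "simple_alg br UNIV"
    and noncompact: "\<not> (\<forall>X. X \<noteq> 0 \<longrightarrow> killing br X X < 0)"
    and simple_ideals: "{I. simple_ideal_of br (derived_alg br (kpart \<theta>)) I} = kk ` {..<r}"
    and kk_inj: "inj_on kk {..<r}"
    and s_def: "s = (if centre br (kpart \<theta>) = {0} then 0 else 1)"
    and kk_centre: "s = 1 \<Longrightarrow> kk r = centre br (kpart \<theta>)"
    and kappa: "\<And>i X Y. i < r + s \<Longrightarrow> X \<in> kk i \<Longrightarrow> Y \<in> kk i \<Longrightarrow>
                  killing_on br (kk i) X Y = \<kappa> i * killing br X Y"
begin

abbreviation "dd \<equiv> derived_alg br kp"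
abbreviation "zz \<equiv> centre br kp"

lemma sub_dd: "subspace dd" by (simp add: derived_alg_def subspace_span)
lemma dd_k: "dd \<subseteq> kp"
  unfolding derived_alg_def using sub_k br_kk by (intro span_minimal) auto
lemma br_dd: "a \<in> kp \<Longrightarrow> b \<in> kp \<Longrightarrow> br a b \<in> dd"
  unfolding derived_alg_def by (rule span_base) blast

lemma sub_zz: "subspace zz"
  using sub_k unfolding subspace_def centre_def by (auto simp: brsimps)
lemma zz_k: "zz \<subseteq> kp" by (auto simp: centre_def)
lemma zz_br: "c \<in> zz \<Longrightarrow> a \<in> kp \<Longrightarrow> br c a = 0" by (auto simp: centre_def)
lemma zz_br': "c \<in> zz \<Longrightarrow> a \<in> kp \<Longrightarrow> br a c = 0" using zz_br anti by (metis neg_equal_0_iff_equal)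

lemma zz_orth_dd: "c \<in> zz \<Longrightarrow> e \<in> dd \<Longrightarrow> Q c e = 0"
proof -
  assume c: "c \<in> zz" and e: "e \<in> dd"
  have "Q c g = 0" if gin: "g \<in> {br a b | a b. a \<in> kp \<and> b \<in> kp}" for g
  proof -
    obtain a b where g: "g = br a b" "a \<in> kp" "b \<in> kp" using gin by blast
    have "Q (br a c) b = - Q c (br a b)" using Q_krule g by blast
    then show ?thesis using zz_br'[OF c g(2)] g(1) by (simp add: Qf.lzero)
  qed
  then show ?thesis using Qf.orth_span[of "{br a b | a b. a \<in> kp \<and> b \<in> kp}" c e] e
    unfolding derived_alg_def by blast
qed

lemma kp_decomp: "v \<in> kp \<Longrightarrow> \<exists>c\<in>zz. \<exists>e\<in>dd. v = c + e"
proof -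
  assume v: "v \<in> kp"
  obtain e where e: "e \<in> dd" "\<forall>y\<in>dd. Q (v - e) y = 0" using Qf.proj_exists[OF sub_dd] by blast
  have t: "v - e \<in> kp" using v e dd_k sub_k by (auto intro: subspace_diff)
  have "br a (v - e) = 0" if a: "a \<in> kp" for a
  proof -
    have "Q (br a (v - e)) y = 0" if y: "y \<in> kp" for y
      using Q_krule[OF a, of "v - e" y] e(2) br_dd[OF a y] by simp
    then show ?thesis using Qf.zero_iff br_kk[OF a t] by blast
  qed
  then have "br (v - e) a = 0" if "a \<in> kp" for a using that anti[of "v - e" a] by simp
  then have "v - e \<in> zz" using t unfolding centre_def by blast
  moreover have "v = (v - e) + e" by simp
  ultimately show ?thesis using e(1) by blast
qed

lemma zz_dd_zero: "x \<in> zz \<Longrightarrow> x \<in> dd \<Longrightarrow> x = 0"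
  using zz_orth_dd[of x x] Qf.zero_iff[of x] by simp

lemma kk_simple: "i < r \<Longrightarrow> simple_ideal_of br dd (kk i)"
  using simple_ideals by blast

lemma kk_props:
  assumes "i < r"
  shows "subspace (kk i)" "kk i \<subseteq> dd" "\<And>a y. a \<in> dd \<Longrightarrow> y \<in> kk i \<Longrightarrow> br a y \<in> kk i"
    "simple_alg br (kk i)"
  using kk_simple[OF assms] by (auto simp: simple_ideal_of_def ideal_of_def)

lemma kk_k: "i < r \<Longrightarrow> kk i \<subseteq> kp" using kk_props(2) dd_k by blast

lemma kk_ideal_kp: "i < r \<Longrightarrow> a \<in> kp \<Longrightarrow> y \<in> kk i \<Longrightarrow> br a y \<in> kk i"
proof -
  assume i: "i < r" and a: "a \<in> kp" and y: "y \<in> kk i"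
  obtain c e where c: "c \<in> zz" "e \<in> dd" "a = c + e" using kp_decomp[OF a] by blast
  have "br a y = br c y + br e y" using c by (simp add: ladd)
  also have "br c y = 0" using zz_br[OF c(1)] kk_k[OF i] y by blast
  finally show ?thesis using kk_props(3)[OF i c(2) y] by simp
qed

lemma kk_closed: "i < r \<Longrightarrow> a \<in> kk i \<Longrightarrow> y \<in> kk i \<Longrightarrow> br a y \<in> kk i"
  using kk_props(2,3) by blast

lemma kk_nonab: "i < r \<Longrightarrow> \<exists>X\<in>kk i. \<exists>Y\<in>kk i. br X Y \<noteq> 0"
  using kk_props(4) by (simp add: simple_alg_def)

lemma kk_ideals: "i < r \<Longrightarrow> ideal_of br (kk i) J \<Longrightarrow> J = {0} \<or> J = kk i"
  using kk_props(4) by (simp add: simple_alg_def)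

lemma kk_gen: "i < r \<Longrightarrow> kk i = span {br a b | a b. a \<in> kk i \<and> b \<in> kk i}"
proof -
  assume i: "i < r"
  let ?D = "span {br a b | a b. a \<in> kk i \<and> b \<in> kk i}"
  have sub: "?D \<subseteq> kk i" using kk_props(1)[OF i] kk_closed[OF i] by (intro span_minimal) auto
  have "ideal_of br (kk i) ?D"
    unfolding ideal_of_def
  proof (intro conjI ballI subspace_span sub)
    fix X Y assume X: "X \<in> kk i" and Y: "Y \<in> ?D"
    have "Y \<in> kk i" using Y sub by blast
    then have "br X Y \<in> {br a b | a b. a \<in> kk i \<and> b \<in> kk i}" using X by blast
    then show "br X Y \<in> ?D" by (rule span_base)
  qed
  moreover have "?D \<noteq> {0}"
  proof
    assume D0: "?D = {0}"
    obtain X Y where XY: "X \<in> kk i" "Y \<in> kk i" "br X Y \<noteq> 0" using kk_nonab[OF i] by blast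
    then have "br X Y \<in> ?D" by (intro span_base) blast
    then show False using D0 XY(3) by blast
  qed
  ultimately show ?thesis using kk_ideals[OF i] by blast
qed

lemma kk_ne: "i < r \<Longrightarrow> kk i \<noteq> {0}"
proof
  assume i: "i < r" and k0: "kk i = {0}"
  obtain X Y where XY: "X \<in> kk i" "Y \<in> kk i" "br X Y \<noteq> 0" using kk_nonab[OF i] by blast
  then have "X = 0" using k0 by blast
  then show False using XY(3) by (simp add: lzero)
qed

lemma kk_disj: "i < r \<Longrightarrow> j < r \<Longrightarrow> i \<noteq> j \<Longrightarrow> kk i \<inter> kk j = {0}"
proof -
  assume i: "i < r" and j: "j < r" and ij: "i \<noteq> j"
  have "ideal_of br (kk i) (kk i \<inter> kk j)"
    unfolding ideal_of_def using kk_props(1)[OF i] kk_props(1)[OF j] kk_closed[OF i]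
      kk_props(3)[OF j] kk_props(2)[OF i]
    by (auto intro: subspace_inter)
  then have "kk i \<inter> kk j = {0} \<or> kk i \<inter> kk j = kk i" using kk_ideals[OF i] by blast
  moreover have "kk i \<inter> kk j \<noteq> kk i"
  proof
    assume "kk i \<inter> kk j = kk i"
    then have sub: "kk i \<subseteq> kk j" by blast
    have "ideal_of br (kk j) (kk i)"
      unfolding ideal_of_def using kk_props(1)[OF i] sub kk_props(3)[OF i] kk_props(2)[OF j]
      by blast
    then have "kk i = {0} \<or> kk i = kk j" using kk_ideals[OF j] by blast
    then show False using kk_ne[OF i] kk_inj i j ij by (auto simp: inj_on_def)
  qed
  ultimately show ?thesis by blast
qed

lemma kk_br0: "i < r \<Longrightarrow> j < r \<Longrightarrow> i \<noteq> j \<Longrightarrow> x \<in> kk i \<Longrightarrow> y \<in> kk j \<Longrightarrow> br x y = 0"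
proof -
  assume i: "i < r" and j: "j < r" and ij: "i \<noteq> j" and x: "x \<in> kk i" and y: "y \<in> kk j"
  have "br x y \<in> kk j" using kk_props(3)[OF j _ y] kk_props(2)[OF i] x by blast
  moreover have "br x y \<in> kk i"
  proof -
    have "br y x \<in> kk i" using kk_ideal_kp[OF i _ x] kk_k[OF j] y by blast
    then have "- br y x \<in> kk i" using kk_props(1)[OF i] subspace_neg by blast
    then show ?thesis using anti[of x y] by simp
  qed
  ultimately show ?thesis using kk_disj[OF i j ij] by blast
qed

lemma kk_orth: "i < r \<Longrightarrow> j < r \<Longrightarrow> i \<noteq> j \<Longrightarrow> x \<in> kk i \<Longrightarrow> y \<in> kk j \<Longrightarrow> Q x y = 0"
proof -
  assume i: "i < r" and j: "j < r" and ij: "i \<noteq> j" and x: "x \<in> kk i" and y: "y \<in> kk j"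
  have "Q y g = 0" if gin: "g \<in> {br a b | a b. a \<in> kk i \<and> b \<in> kk i}" for g
  proof -
    obtain a b where g: "g = br a b" "a \<in> kk i" "b \<in> kk i" using gin by blast
    have "Q (br a b) y = - Q b (br a y)" using Q_krule kk_k[OF i] g by blast
    then show ?thesis using kk_br0[OF i j ij g(2) y] g(1) by (simp add: Qf.rzero Qf.lzero Qf.sym)
  qed
  then have "Q y x = 0" using Qf.orth_span x kk_gen[OF i] by blast
  then show ?thesis by (simp add: Qf.sym)
qed

lemma perp_br0:
  assumes J: "ideal_of br dd J" and j': "j' \<in> dd" "\<forall>w\<in>J. Q j' w = 0" and w: "w \<in> J"
  shows "br j' w = 0"
proof -
  have Jd: "J \<subseteq> dd" and Jc: "\<And>a y. a \<in> dd \<Longrightarrow> y \<in> J \<Longrightarrow> br a y \<in> J" using J by (auto simp: ideal_of_def)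
  have wk: "w \<in> kp" using Jd dd_k w by blast
  have in1: "br j' w \<in> J" using Jc j'(1) w by blast
  have "Q (br j' w) u = 0" if u: "u \<in> J" for u
  proof -
    have "Q (br w j') u = - Q j' (br w u)" using Q_krule[OF wk] by blast
    moreover have "br w u \<in> J" using Jc Jd w u by blast
    ultimately have "Q (br w j') u = 0" using j'(2) by simp
    then show ?thesis using anti[of j' w] by (simp add: Qf.lneg)
  qed
  then show ?thesis using in1 Qf.zero_iff by blast
qed

lemma dd_span: "dd \<subseteq> span (\<Union>i<r. kk i)"
proof
  fix v assume v: "v \<in> dd"
  let ?S = "span (\<Union>i<r. kk i)"
  have Sd: "?S \<subseteq> dd" using kk_props(2) sub_dd by (intro span_minimal) auto
  have S_id: "br a y \<in> ?S" if a: "a \<in> dd" and y: "y \<in> ?S" for a y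
  proof -
    have "subspace {y. br a y \<in> ?S}" by (rule subspace_pre[OF lin_ad subspace_span])
    moreover have "(\<Union>i<r. kk i) \<subseteq> {y. br a y \<in> ?S}"
      using kk_props(3) a by (auto intro!: span_base)
    ultimately have "?S \<subseteq> {y. br a y \<in> ?S}" by (intro span_minimal)
    then show ?thesis using y by blast
  qed
  obtain s where s: "s \<in> ?S" "\<forall>y\<in>?S. Q (v - s) y = 0" using Qf.proj_exists[of ?S v] subspace_span by blast
  define R where "R = {x \<in> dd. \<forall>y\<in>?S. Q x y = 0}"
  have tR: "v - s \<in> R" using s v Sd sub_dd unfolding R_def by (auto intro: subspace_diff)
  have R_ideal: "ideal_of br dd R"
    unfolding ideal_of_def
  proof (intro conjI ballI)
    show "subspace R" unfolding R_def
      using sub_dd Qf.sub_orth[of ?S] by (simp add: Collect_conj_eq subspace_inter)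
    show "R \<subseteq> dd" by (auto simp: R_def)
    fix a y assume a: "a \<in> dd" and y: "y \<in> R"
    have "br a y \<in> dd" using a y dd_k br_dd unfolding R_def by blast
    moreover have "Q (br a y) z = 0" if z: "z \<in> ?S" for z
      using Q_krule[of a y z] a dd_k y S_id[OF a z] unfolding R_def by auto
    ultimately show "br a y \<in> R" unfolding R_def by blast
  qed
  show "v \<in> ?S"
  proof (rule ccontr)
    assume "v \<notin> ?S"
    then have "v - s \<noteq> 0" using s by auto
    define P where "P J \<longleftrightarrow> ideal_of br dd J \<and> J \<noteq> {0} \<and> J \<subseteq> R" for J
    have "P R" unfolding P_def using R_ideal tR \<open>v - s \<noteq> 0\<close> by blast
    then obtain J where J: "P J" and Jmin: "\<And>J'. P J' \<Longrightarrow> dim J \<le> dim J'"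
      using ex_has_least_nat[of P R dim] by blast
    have Jid: "ideal_of br dd J" and Jne: "J \<noteq> {0}" and JR: "J \<subseteq> R" using J by (auto simp: P_def)
    have Jsub: "subspace J" and Jd: "J \<subseteq> dd" and Jc: "\<And>a y. a \<in> dd \<Longrightarrow> y \<in> J \<Longrightarrow> br a y \<in> J"
      using Jid by (auto simp: ideal_of_def)
    have dsplit: "\<exists>j\<in>J. \<exists>j'\<in>dd. (\<forall>w\<in>J. Q j' w = 0) \<and> a = j + j'" if a: "a \<in> dd" for a
    proof -
      obtain j where j: "j \<in> J" "\<forall>y\<in>J. Q (a - j) y = 0" using Qf.proj_exists[OF Jsub] by blast
      have "a - j \<in> dd" using a j Jd sub_dd by (auto intro: subspace_diff)
      moreover have "a = j + (a - j)" by simp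
      ultimately show ?thesis using j by blast
    qed
    have "simple_ideal_of br dd J"
      unfolding simple_ideal_of_def simple_alg_def
    proof (intro conjI allI impI Jid)
      show "\<exists>X\<in>J. \<exists>Y\<in>J. br X Y \<noteq> 0"
      proof (rule ccontr)
        assume ab: "\<not> (\<exists>X\<in>J. \<exists>Y\<in>J. br X Y \<noteq> 0)"
        have "x \<in> zz" if x: "x \<in> J" for x
        proof -
          have xk: "x \<in> kp" using x Jd dd_k by blast
          have "br a x = 0" if a: "a \<in> kp" for a
          proof -
            obtain c e where ce: "c \<in> zz" "e \<in> dd" "a = c + e" using kp_decomp[OF a] by blast
            obtain j j' where jj: "j \<in> J" "j' \<in> dd" "\<forall>w\<in>J. Q j' w = 0" "e = j + j'"
              using dsplit[OF ce(2)] by blast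
            have "br a x = br c x + br j x + br j' x" using ce jj by (simp add: ladd)
            moreover have "br c x = 0" using zz_br[OF ce(1) xk] .
            moreover have "br j x = 0" using ab jj(1) x by blast
            moreover have "br j' x = 0" using perp_br0[OF Jid jj(2) jj(3) x] .
            ultimately show ?thesis by simp
          qed
          then have "br x a = 0" if "a \<in> kp" for a using that anti[of x a] by simp
          then show ?thesis using xk unfolding centre_def by blast
        qed
        then have "J \<subseteq> {0}" using zz_dd_zero Jd by blast
        then show False using Jne Jsub subspace_0 by blast
      qed
      fix J'' assume J'': "ideal_of br J J''"
      have J''sub: "subspace J''" "J'' \<subseteq> J" "\<And>a y. a \<in> J \<Longrightarrow> y \<in> J'' \<Longrightarrow> br a y \<in> J''"
        using J'' by (auto simp: ideal_of_def)
      have "ideal_of br dd J''"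
        unfolding ideal_of_def
      proof (intro conjI ballI J''sub(1))
        show "J'' \<subseteq> dd" using J''sub(2) Jd by blast
        fix a y assume a: "a \<in> dd" and y: "y \<in> J''"
        obtain j j' where jj: "j \<in> J" "j' \<in> dd" "\<forall>w\<in>J. Q j' w = 0" "a = j + j'"
          using dsplit[OF a] by blast
        have "br a y = br j y + br j' y" using jj by (simp add: ladd)
        moreover have "br j' y = 0" using perp_br0[OF Jid jj(2) jj(3)] y J''sub(2) by blast
        ultimately show "br a y \<in> J''" using J''sub(3)[OF jj(1) y] by simp
      qed
      show "J'' = {0} \<or> J'' = J"
      proof (cases "J'' = {0}")
        case False
        then have "P J''" unfolding P_def using \<open>ideal_of br dd J''\<close> J''sub JR by blast
        then have "dim J \<le> dim J''" by (rule Jmin)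
        then have "J'' = J" using subspace_dim_equal[OF J''sub(1) Jsub J''sub(2)] by simp
        then show ?thesis by blast
      qed blast
    qed
    then have "J \<in> kk ` {..<r}" using simple_ideals by blast
    then have "J \<subseteq> ?S" by (auto intro: span_base)
    then have "J \<subseteq> {0}" using JR unfolding R_def using Qf.zero_iff by blast
    then show False using Jne Jsub subspace_0 by blast
  qed
qed

end

lemma sum_single:
  assumes "finite S" "i \<in> S" "\<And>j. j \<in> S \<Longrightarrow> j \<noteq> i \<Longrightarrow> f j = 0"
  shows "sum f S = (f i :: 'b::comm_monoid_add)"
proof -
  have "sum f (S - {i}) = 0" using assms(3) by (intro sum.neutral) auto
  then show ?thesis using sum.remove[OF assms(1,2), of f] by simp
qed

context ipf
begin

lemma onb_proj:
  assumes b: "onb Q V b"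
  shows "form_proj Q V X = (\<Sum>e\<in>b. Q X e *\<^sub>R e)"
  unfolding form_proj_def
proof (rule the_equality)
  have bV: "b \<subseteq> V" and sV: "subspace V" using b onb_subspace[OF b] by (auto simp: onb_def)
  let ?s = "\<Sum>e\<in>b. Q X e *\<^sub>R e"
  have sin: "?s \<in> V" using bV sV by (intro subspace_sum subspace_scale) auto
  have "Q (X - ?s) e = 0" if "e \<in> b" for e
    using onb_Q_sum[OF b that, of "\<lambda>e. Q X e"] by (simp add: Qsimps)
  then have "Q (X - ?s) z = 0" if "z \<in> V" for z
    using orth_span[of b "X - ?s" z] that b by (auto simp: onb_def)
  then show "?s \<in> V \<and> (\<forall>z\<in>V. Q (X - ?s) z = 0)" using sin by blast
  fix y assume y: "y \<in> V \<and> (\<forall>z\<in>V. Q (X - y) z = 0)"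
  have "y - ?s \<in> V" using y sin sV by (auto intro: subspace_diff)
  moreover have "Q (y - ?s) z = 0" if "z \<in> V" for z
  proof -
    have "y - ?s = (X - ?s) - (X - y)" by simp
    then show ?thesis using y \<open>\<And>z. z \<in> V \<Longrightarrow> Q (X - ?s) z = 0\<close>[OF that] that by (simp add: Qsimps)
  qed
  ultimately have "y - ?s = 0" using zero_iff by blast
  then show "y = ?s" by simp
qed

end

locale msetting = setting br \<theta> kk r s \<kappa> for br :: "'a::euclidean_space \<Rightarrow> 'a \<Rightarrow> 'a" and \<theta> kk r s \<kappa> +
  fixes \<alpha> :: "nat \<Rightarrow> real" and \<beta> :: real
  assumes beta_pos: "\<beta> > 0"
    and alpha_pos: "\<And>i. i < r + s \<Longrightarrow> \<alpha> i > 0"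
begin

abbreviation "m \<equiv> r + s"

lemma s01: "s = 0 \<or> s = 1" using s_def by simp

lemma comp_sub: "i < m \<Longrightarrow> subspace (kk i)" "i < m \<Longrightarrow> kk i \<subseteq> kp"
proof -
  assume i: "i < m"
  show "subspace (kk i)"
  proof (cases "i < r")
    case True then show ?thesis using kk_props(1) by blast
  next
    case False
    then have "s = 1" "i = r" using i s01 by auto
    then show ?thesis using kk_centre sub_zz by simp
  qed
  show "kk i \<subseteq> kp"
  proof (cases "i < r")
    case True then show ?thesis using kk_k by blast
  next
    case False
    then have "s = 1" "i = r" using i s01 by auto
    then show ?thesis using kk_centre zz_k by simp
  qed
qed

lemma comp_ideal: "i < m \<Longrightarrow> a \<in> kp \<Longrightarrow> y \<in> kk i \<Longrightarrow> br a y \<in> kk i"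
proof -
  assume i: "i < m" and a: "a \<in> kp" and y: "y \<in> kk i"
  show ?thesis
  proof (cases "i < r")
    case True then show ?thesis using kk_ideal_kp a y by blast
  next
    case False
    then have "s = 1" "i = r" using i s01 by auto
    then have "kk i = zz" using kk_centre by simp
    then have "br a y = 0" using zz_br' y a by simp
    then show ?thesis using comp_sub(1)[OF i] subspace_0 by simp
  qed
qed

lemma comp_both: "i < m \<Longrightarrow> j < m \<Longrightarrow> i \<noteq> j \<Longrightarrow> x \<in> kk i \<Longrightarrow> y \<in> kk j \<Longrightarrow> Q x y = 0 \<and> br x y = 0"
proof -
  assume i: "i < m" and j: "j < m" and ij: "i \<noteq> j" and x: "x \<in> kk i" and y: "y \<in> kk j"
  consider "i < r" "j < r" | "i = r" "j < r" "s = 1" | "i < r" "j = r" "s = 1"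
    using i j ij s01 by fastforce
  then show ?thesis
  proof cases
    case 1 then show ?thesis using kk_orth kk_br0 ij x y by blast
  next
    case 2
    then have xz: "x \<in> zz" using kk_centre x by simp
    have yd: "y \<in> dd" using kk_props(2) 2 y by blast
    show ?thesis using zz_orth_dd[OF xz yd] zz_br[OF xz] yd dd_k by blast
  next
    case 3
    then have yz: "y \<in> zz" using kk_centre y by simp
    have xd: "x \<in> dd" using kk_props(2) 3 x by blast
    have "Q x y = Q y x" by (rule Qf.sym)
    also have "\<dots> = 0" by (rule zz_orth_dd[OF yz xd])
    finally show ?thesis using zz_br'[OF yz] xd dd_k by blast
  qed
qed

lemma comp_orth: "i < m \<Longrightarrow> j < m \<Longrightarrow> i \<noteq> j \<Longrightarrow> x \<in> kk i \<Longrightarrow> y \<in> kk j \<Longrightarrow> Q x y = 0"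
  using comp_both by blast
lemma comp_br0: "i < m \<Longrightarrow> j < m \<Longrightarrow> i \<noteq> j \<Longrightarrow> x \<in> kk i \<Longrightarrow> y \<in> kk j \<Longrightarrow> br x y = 0"
  using comp_both by blast

lemma comp_span: "kp \<subseteq> span (\<Union>i<m. kk i)"
proof
  fix x assume x: "x \<in> kp"
  obtain c e where ce: "c \<in> zz" "e \<in> dd" "x = c + e" using kp_decomp[OF x] by blast
  have "(\<Union>i<r. kk i) \<subseteq> (\<Union>i<m. kk i)" by (rule UN_mono) auto
  then have "e \<in> span (\<Union>i<m. kk i)"
    using dd_span ce(2) span_mono[of "\<Union>i<r. kk i" "\<Union>i<m. kk i"] by blast
  moreover have "c \<in> span (\<Union>i<m. kk i)"
  proof (cases "s = 1")
    case True
    then have "c \<in> kk r" using kk_centre ce by simp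
    then show ?thesis using True by (auto intro!: span_base)
  next
    case False
    then have "zz = {0}" using s_def by (auto split: if_splits)
    then show ?thesis using ce span_zero by simp
  qed
  ultimately show "x \<in> span (\<Union>i<m. kk i)" using ce span_add by simp
qed

definition "Ep = (SOME b. onb Q pp b)"
definition "EE i = (SOME b. onb Q (kk i) b)"

lemma onb_p: "onb Q pp Ep"
  unfolding Ep_def using Qf.onb_exists[OF sub_p] by (rule someI_ex)
lemma onb_k: "i < m \<Longrightarrow> onb Q (kk i) (EE i)"
  unfolding EE_def using Qf.onb_exists[OF comp_sub(1)] by (rule someI_ex)

lemma Ep_p: "e \<in> Ep \<Longrightarrow> e \<in> pp" using onb_p by (auto simp: onb_def)
lemma EE_k: "i < m \<Longrightarrow> e \<in> EE i \<Longrightarrow> e \<in> kk i" using onb_k[of i] unfolding onb_def by blast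
lemma EE_kp: "i < m \<Longrightarrow> e \<in> EE i \<Longrightarrow> e \<in> kp" using EE_k comp_sub(2) by blast
lemma fin_Ep: "finite Ep" using onb_p by (simp add: onb_def)
lemma fin_EE: "i < m \<Longrightarrow> finite (EE i)" using onb_k by (simp add: onb_def)

definition "Pp x = (\<Sum>e\<in>Ep. Q x e *\<^sub>R e)"
definition "Pk i x = (\<Sum>e\<in>EE i. Q x e *\<^sub>R e)"

lemma Pp_in: "Pp x \<in> pp"
  unfolding Pp_def using Ep_p sub_p by (intro subspace_sum subspace_scale) auto
lemma Pk_in: "i < m \<Longrightarrow> Pk i x \<in> kk i"
  unfolding Pk_def using EE_k comp_sub(1) by (intro subspace_sum subspace_scale) auto
lemma Pk_kp: "i < m \<Longrightarrow> Pk i x \<in> kp" using Pk_in comp_sub(2) by blast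

lemma Pp_id: "x \<in> pp \<Longrightarrow> Pp x = x" unfolding Pp_def using Qf.onb_expand[OF onb_p] by simp
lemma Pk_id: "i < m \<Longrightarrow> x \<in> kk i \<Longrightarrow> Pk i x = x" unfolding Pk_def using Qf.onb_expand[OF onb_k] by simp
lemma Pp_k: "x \<in> kp \<Longrightarrow> Pp x = 0" unfolding Pp_def using Q_kp Ep_p by (simp add: sum.neutral)
lemma Pk_p: "i < m \<Longrightarrow> x \<in> pp \<Longrightarrow> Pk i x = 0" unfolding Pk_def using Q_pk EE_kp by (simp add: sum.neutral)
lemma Pk_other: "i < m \<Longrightarrow> j < m \<Longrightarrow> i \<noteq> j \<Longrightarrow> x \<in> kk j \<Longrightarrow> Pk i x = 0"
  unfolding Pk_def using comp_orth EE_k by (simp add: sum.neutral)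

lemma Pp_lin: "linear Pp"
  by (rule linearI) (simp_all add: Pp_def Qf.Qsimps scaleR_add_left sum.distrib scaleR_sum_right)
lemma Pk_lin: "linear (Pk i)"
  by (rule linearI) (simp_all add: Pk_def Qf.Qsimps scaleR_add_left sum.distrib scaleR_sum_right)

lemma Pp_add: "Pp (x + y) = Pp x + Pp y" using Pp_lin by (rule linear_add)
lemma Pk_add: "Pk i (x + y) = Pk i x + Pk i y" using Pk_lin by (rule linear_add)
lemma Pp_diff: "Pp (x - y) = Pp x - Pp y" using Pp_lin by (rule linear_diff)
lemma Pk_diff: "Pk i (x - y) = Pk i x - Pk i y" using Pk_lin by (rule linear_diff)
lemma Pp_scale: "Pp (c *\<^sub>R x) = c *\<^sub>R Pp x" using Pp_lin by (rule linear_scale)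
lemma Pk_scale: "Pk i (c *\<^sub>R x) = c *\<^sub>R Pk i x" using Pk_lin by (rule linear_scale)
lemma Pp_sum: "Pp (sum f S) = (\<Sum>j\<in>S. Pp (f j))" using Pp_lin by (rule linear_sum)
lemma Pk_sum: "Pk i (sum f S) = (\<Sum>j\<in>S. Pk i (f j))" using Pk_lin by (rule linear_sum)

lemma Pk_Q: "i < m \<Longrightarrow> e \<in> EE i \<Longrightarrow> Q (Pk i x) e = Q x e"
  unfolding Pk_def by (rule Qf.onb_Q_sum[OF onb_k])
lemma Pp_Q: "e \<in> Ep \<Longrightarrow> Q (Pp x) e = Q x e"
  unfolding Pp_def by (rule Qf.onb_Q_sum[OF onb_p])

lemma Q_Pk_Pk: "i < m \<Longrightarrow> Q (Pk i a) (Pk i b) = (\<Sum>e\<in>EE i. Q a e * Q b e)"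
proof -
  assume i: "i < m"
  have "Q (Pk i a) (Pk i b) = (\<Sum>e\<in>EE i. Q (Pk i a) e * Q (Pk i b) e)"
    by (rule Qf.onb_Q_expand2[OF onb_k[OF i] Pk_in[OF i]])
  also have "\<dots> = (\<Sum>e\<in>EE i. Q a e * Q b e)" using Pk_Q[OF i] by simp
  finally show ?thesis .
qed

lemma Q_Pp_Pp: "Q (Pp a) (Pp b) = (\<Sum>e\<in>Ep. Q a e * Q b e)"
proof -
  have "Q (Pp a) (Pp b) = (\<Sum>e\<in>Ep. Q (Pp a) e * Q (Pp b) e)"
    by (rule Qf.onb_Q_expand2[OF onb_p Pp_in])
  also have "\<dots> = (\<Sum>e\<in>Ep. Q a e * Q b e)" using Pp_Q by simp
  finally show ?thesis .
qed

lemma Q_Pk: "i < m \<Longrightarrow> Q (Pk i a) b = Q (Pk i a) (Pk i b)"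
proof -
  assume i: "i < m"
  have "Q (Pk i a) b = (\<Sum>e\<in>EE i. Q a e * Q e b)" by (simp add: Pk_def Qf.lsum Qf.lmul)
  also have "\<dots> = (\<Sum>e\<in>EE i. Q a e * Q b e)" by (simp add: Qf.sym[of _ b])
  finally show ?thesis using Q_Pk_Pk[OF i] by simp
qed

lemma Q_Pk': "i < m \<Longrightarrow> Q a (Pk i b) = Q (Pk i a) (Pk i b)"
  using Q_Pk[of i b a] Qf.sym[of a "Pk i b"] Qf.sym[of "Pk i b" "Pk i a"] by simp

lemma Q_Pp: "Q (Pp a) b = Q (Pp a) (Pp b)"
proof -
  have "Q (Pp a) b = (\<Sum>e\<in>Ep. Q a e * Q e b)" by (simp add: Pp_def Qf.lsum Qf.lmul)
  also have "\<dots> = (\<Sum>e\<in>Ep. Q a e * Q b e)" by (simp add: Qf.sym[of _ b])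
  finally show ?thesis using Q_Pp_Pp by simp
qed

lemma Q_Pp': "Q a (Pp b) = Q (Pp a) (Pp b)"
  using Q_Pp[of b a] Qf.sym[of a "Pp b"] Qf.sym[of "Pp b" "Pp a"] by simp

lemma Q_Pk_in: "i < m \<Longrightarrow> y \<in> kk i \<Longrightarrow> Q (Pk i x) y = Q x y"
  using Q_Pk'[of i x y] Pk_id by simp
lemma Q_Pp_in: "y \<in> pp \<Longrightarrow> Q (Pp x) y = Q x y"
  using Q_Pp'[of x y] Pp_id by simp

lemma k_decomp: "x \<in> kp \<Longrightarrow> x = (\<Sum>i<m. Pk i x)"
proof -
  assume x: "x \<in> kp"
  let ?w = "x - (\<Sum>i<m. Pk i x)"
  have "(\<Sum>i<m. Pk i x) \<in> span (\<Union>i<m. kk i)"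
    using Pk_in by (intro span_sum) (auto intro: span_base)
  then have wS: "?w \<in> span (\<Union>i<m. kk i)" using comp_span x by (auto intro: span_diff)
  have "Q ?w y = 0" if y: "y \<in> (\<Union>i<m. kk i)" for y
  proof -
    obtain i where i: "i < m" "y \<in> kk i" using y by blast
    have "(\<Sum>j<m. Q (Pk j x) y) = Q (Pk i x) y"
    proof (rule sum_single)
      fix j assume j: "j \<in> {..<m}" "j \<noteq> i"
      show "Q (Pk j x) y = 0" using comp_orth[OF _ i(1) j(2) Pk_in i(2)] j by simp
    qed (use i in auto)
    then show ?thesis using Q_Pk_in[OF i] by (simp add: Qf.Qsimps)
  qed
  then have "Q ?w ?w = 0" using Qf.orth_span[OF _ wS] by blast
  then show ?thesis by (simp add: Qf.zero_iff)
qed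

lemma full_decomp: "x = Pp x + (\<Sum>i<m. Pk i x)"
proof -
  let ?u = "x - Pp x"
  have u1: "(1/2) *\<^sub>R (?u - \<theta> ?u) \<in> pp" by (rule decomp2)
  have u2: "(1/2) *\<^sub>R (?u + \<theta> ?u) \<in> kp" by (rule decomp1)
  have u3: "?u = (1/2) *\<^sub>R (?u + \<theta> ?u) + (1/2) *\<^sub>R (?u - \<theta> ?u)" by (rule decomp3)
  have "Q ?u y = 0" if "y \<in> pp" for y using Q_Pp_in[OF that, of x] by (simp add: Qf.Qsimps)
  then have "Q ?u ((1/2) *\<^sub>R (?u - \<theta> ?u)) = 0" using u1 by blast
  then have "Q ((1/2) *\<^sub>R (?u - \<theta> ?u)) ((1/2) *\<^sub>R (?u - \<theta> ?u)) = 0"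
    using Q_kp[OF u2 u1] by (subst (asm) u3) (simp add: Qf.ladd)
  then have "(1/2) *\<^sub>R (?u - \<theta> ?u) = 0" by (simp add: Qf.zero_iff)
  then have "?u \<in> kp" using u2 u3 by simp
  then have "?u = (\<Sum>i<m. Pk i ?u)" by (rule k_decomp)
  also have "\<dots> = (\<Sum>i<m. Pk i x)" by (simp add: Pk_diff Pk_p[OF _ Pp_in])
  finally show ?thesis by (simp add: algebra_simps)
qed

lemma vanish:
  assumes L: "linear L" and p: "\<And>x. x \<in> pp \<Longrightarrow> L x = 0" and k: "\<And>i x. i < m \<Longrightarrow> x \<in> kk i \<Longrightarrow> L x = 0"
  shows "L x = (0::'b::real_vector)"
proof -
  have "L x = L (Pp x) + (\<Sum>i<m. L (Pk i x))"
    by (subst full_decomp) (simp add: linear_add[OF L] linear_sum[OF L])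
  also have "\<dots> = 0" using p[OF Pp_in] k[OF _ Pk_in] by simp
  finally show ?thesis .
qed

definition "gm = (\<lambda>X Y. \<beta> * form_restr (Qform br \<theta>) (ppart \<theta>) X Y
                + (\<Sum>i<r + s. \<alpha> i * form_restr (Qform br \<theta>) (kk i) X Y))"

lemma gm_eq: "gm X Y = \<beta> * Q (Pp X) (Pp Y) + (\<Sum>i<m. \<alpha> i * Q (Pk i X) (Pk i Y))"
proof -
  have "form_restr Q pp X Y = Q (Pp X) (Pp Y)"
    unfolding form_restr_def Qf.onb_proj[OF onb_p] Pp_def ..
  moreover have "form_restr Q (kk i) X Y = Q (Pk i X) (Pk i Y)" if "i < m" for i
    unfolding form_restr_def Qf.onb_proj[OF onb_k[OF that]] Pk_def ..
  ultimately show ?thesis unfolding gm_def by simp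
qed

lemma gm_p: "x \<in> pp \<Longrightarrow> gm x y = \<beta> * Q x y"
proof -
  assume x: "x \<in> pp"
  have "Q (Pp x) (Pp y) = Q (Pp y) x" using Pp_id[OF x] Qf.sym by simp
  also have "\<dots> = Q x y" using Q_Pp_in[OF x, of y] Qf.sym by simp
  finally show ?thesis using x by (simp add: gm_eq Pk_p Qf.lzero)
qed
lemma gm_k: "i < m \<Longrightarrow> x \<in> kk i \<Longrightarrow> gm x y = \<alpha> i * Q x y"
proof -
  assume i: "i < m" and x: "x \<in> kk i"
  have xk: "x \<in> kp" using x comp_sub(2)[OF i] by blast
  have "(\<Sum>j<m. \<alpha> j * Q (Pk j x) (Pk j y)) = \<alpha> i * Q (Pk i x) (Pk i y)"
  proof (rule sum_single)
    fix j assume j: "j \<in> {..<m}" "j \<noteq> i"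
    show "\<alpha> j * Q (Pk j x) (Pk j y) = 0" using Pk_other[OF _ i _ x] j by (simp add: Qf.lzero)
  qed (use i in auto)
  moreover have "Q (Pk i x) (Pk i y) = Q x y"
  proof -
    have "Q (Pk i x) (Pk i y) = Q (Pk i y) x" using Pk_id[OF i x] Qf.sym by simp
    also have "\<dots> = Q x y" using Q_Pk_in[OF i x, of y] Qf.sym by simp
    finally show ?thesis .
  qed
  ultimately show ?thesis using Pp_k[OF xk] Pk_id[OF i x]
    by (simp add: gm_eq Qf.lzero)
qed

lemma gm_sym: "gm x y = gm y x" by (simp add: gm_eq Qf.sym)
lemma gm_p2: "y \<in> pp \<Longrightarrow> gm x y = \<beta> * Q x y" using gm_p[of y x] gm_sym[of x y] Qf.sym[of y x] by simp
lemma gm_k2: "i < m \<Longrightarrow> y \<in> kk i \<Longrightarrow> gm x y = \<alpha> i * Q x y" using gm_k[of i y x] gm_sym[of x y] Qf.sym[of y x] by simp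

lemma gm_bil: "bilinear gm"
  unfolding bilinear_def gm_eq
  by (auto intro!: linearI simp: Pp_add Pk_add Pp_scale Pk_scale Qf.Qsimps sum.distrib
       sum_distrib_left algebra_simps)

lemma gm_nondeg: "(\<And>Z. gm W Z = 0) \<Longrightarrow> W = 0"
proof -
  assume h: "\<And>Z. gm W Z = 0"
  have "gm W W = \<beta> * Q (Pp W) (Pp W) + (\<Sum>i<m. \<alpha> i * Q (Pk i W) (Pk i W))" by (simp add: gm_eq)
  moreover have "0 \<le> \<beta> * Q (Pp W) (Pp W)" using beta_pos Qf.nonneg by simp
  moreover have "0 \<le> \<alpha> i * Q (Pk i W) (Pk i W)" if "i \<in> {..<m}" for i
    using alpha_pos[of i] Qf.nonneg that by simp
  moreover have "(\<Sum>i<m. \<alpha> i * Q (Pk i W) (Pk i W)) \<ge> 0" by (rule sum_nonneg) fact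
  ultimately have z1: "\<beta> * Q (Pp W) (Pp W) = 0" and zs: "(\<Sum>i<m. \<alpha> i * Q (Pk i W) (Pk i W)) = 0"
    using h[of W] by linarith+
  have z2: "\<forall>i\<in>{..<m}. \<alpha> i * Q (Pk i W) (Pk i W) = 0"
    using zs sum_nonneg_eq_0_iff[of "{..<m}" "\<lambda>i. \<alpha> i * Q (Pk i W) (Pk i W)"]
      \<open>\<And>i. i \<in> {..<m} \<Longrightarrow> 0 \<le> \<alpha> i * Q (Pk i W) (Pk i W)\<close> by blast
  note z = z1 z2
  have "Pp W = 0" using z(1) beta_pos Qf.zero_iff by simp
  moreover have "Pk i W = 0" if "i < m" for i
  proof -
    have "\<alpha> i * Q (Pk i W) (Pk i W) = 0" using z(2) that by simp
    then have "Q (Pk i W) (Pk i W) = 0" using alpha_pos[OF that] by simp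
    then show ?thesis by (simp add: Qf.zero_iff)
  qed
  ultimately show "W = 0" using full_decomp[of W] by simp
qed

end

context msetting
begin

lemmas gmsimps = bilinear_ladd[OF gm_bil] bilinear_radd[OF gm_bil]
  bilinear_lmul[OF gm_bil] bilinear_rmul[OF gm_bil]
  bilinear_lsub[OF gm_bil] bilinear_rsub[OF gm_bil]
  bilinear_lzero[OF gm_bil] bilinear_rzero[OF gm_bil]

definition "cc i = 1/2 + \<alpha> i / (2 * \<beta>)"

definition "N X Y = (1/2) *\<^sub>R br X Y + (\<Sum>i<m. cc i *\<^sub>R br (Pk i X) (Pp Y)) - (\<Sum>i<m. cc i *\<^sub>R br (Pp X) (Pk i Y))"

lemma half_half: "(1/2) *\<^sub>R v + (1/2) *\<^sub>R v = (v::'b::real_vector)"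
proof -
  have "(1/2) *\<^sub>R v + (1/2) *\<^sub>R v = ((1/2) + (1/2::real)) *\<^sub>R v" by (rule scaleR_add_left[symmetric])
  then show ?thesis by simp
qed

lemma N_bil: "bilinear N"
  unfolding bilinear_def N_def
  by (auto intro!: linearI simp: brsimps Pp_add Pk_add Pp_scale Pk_scale sum.distrib
       scaleR_add_right scaleR_sum_right scaleR_diff_right mult.commute)

lemmas Nsimps = bilinear_ladd[OF N_bil] bilinear_radd[OF N_bil]
  bilinear_lmul[OF N_bil] bilinear_rmul[OF N_bil]
  bilinear_lsub[OF N_bil] bilinear_rsub[OF N_bil]
  bilinear_lzero[OF N_bil] bilinear_rzero[OF N_bil]
  bilinear_lneg[OF N_bil] bilinear_rneg[OF N_bil]

lemma N_pp: "x \<in> pp \<Longrightarrow> y \<in> pp \<Longrightarrow> N x y = (1/2) *\<^sub>R br x y"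
  by (simp add: N_def Pk_p brsimps)

lemma N_kk: "x \<in> kp \<Longrightarrow> y \<in> kp \<Longrightarrow> N x y = (1/2) *\<^sub>R br x y"
  by (simp add: N_def Pp_k brsimps)

lemma N_pkgen: "x \<in> pp \<Longrightarrow> y \<in> kp \<Longrightarrow> N x y = (1/2) *\<^sub>R br x y - (\<Sum>i<m. cc i *\<^sub>R br x (Pk i y))"
  by (simp add: N_def Pk_p Pp_k Pp_id brsimps sum_negf)

lemma N_kpgen: "x \<in> kp \<Longrightarrow> y \<in> pp \<Longrightarrow> N x y = (1/2) *\<^sub>R br x y + (\<Sum>i<m. cc i *\<^sub>R br (Pk i x) y)"
  by (simp add: N_def Pk_p Pp_k Pp_id brsimps)

lemma sum_one_comp:
  fixes f :: "nat \<Rightarrow> 'a \<Rightarrow> 'b::ab_group_add"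
  assumes j: "j < m" and y: "y \<in> kk j"
  shows "(\<Sum>i<m. f i (Pk i y)) = f j y - f j 0 + (\<Sum>i<m. f i 0)"
proof -
  have "(\<Sum>i<m. f i (Pk i y)) = (\<Sum>i<m. (if i = j then f j y - f j 0 else 0) + f i 0)"
    using Pk_id[OF j y] Pk_other[OF _ j _ y] by (intro sum.cong) auto
  also have "\<dots> = f j y - f j 0 + (\<Sum>i<m. f i 0)" using j by (simp add: sum.distrib)
  finally show ?thesis .
qed

lemma N_pk: "j < m \<Longrightarrow> x \<in> pp \<Longrightarrow> y \<in> kk j \<Longrightarrow> N x y = (- (\<alpha> j / (2 * \<beta>))) *\<^sub>R br x y"
proof -
  assume j: "j < m" and x: "x \<in> pp" and y: "y \<in> kk j"
  have yk: "y \<in> kp" using y comp_sub(2)[OF j] by blast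
  have "(\<Sum>i<m. cc i *\<^sub>R br x (Pk i y)) = cc j *\<^sub>R br x y"
    using sum_one_comp[OF j y, of "\<lambda>i v. cc i *\<^sub>R br x v"] by (simp add: brsimps)
  then show ?thesis using N_pkgen[OF x yk] by (simp add: cc_def algebra_simps half_half)
qed

lemma N_kp: "j < m \<Longrightarrow> x \<in> kk j \<Longrightarrow> y \<in> pp \<Longrightarrow> N x y = (1 + \<alpha> j / (2 * \<beta>)) *\<^sub>R br x y"
proof -
  assume j: "j < m" and x: "x \<in> kk j" and y: "y \<in> pp"
  have xk: "x \<in> kp" using x comp_sub(2)[OF j] by blast
  have "(\<Sum>i<m. cc i *\<^sub>R br (Pk i x) y) = cc j *\<^sub>R br x y"
    using sum_one_comp[OF j x, of "\<lambda>i v. cc i *\<^sub>R br v y"] by (simp add: brsimps)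
  then show ?thesis using N_kpgen[OF xk y] by (simp add: cc_def algebra_simps half_half)
qed

lemma N_par_pp: "x \<in> pp \<Longrightarrow> y \<in> pp \<Longrightarrow> N x y \<in> kp"
  using N_pp br_pp sub_k by (simp add: subspace_scale)
lemma N_par_kk: "x \<in> kp \<Longrightarrow> y \<in> kp \<Longrightarrow> N x y \<in> kp"
  using N_kk br_kk sub_k by (simp add: subspace_scale)
lemma N_par_pk: "x \<in> pp \<Longrightarrow> y \<in> kp \<Longrightarrow> N x y \<in> pp"
  using N_pkgen[of x y] br_pk Pk_kp sub_p
  by (auto intro!: subspace_diff subspace_scale subspace_sum)
lemma N_par_kp: "x \<in> kp \<Longrightarrow> y \<in> pp \<Longrightarrow> N x y \<in> pp"
  using N_kpgen[of x y] br_kp Pk_kp sub_p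
  by (auto intro!: subspace_add subspace_scale subspace_sum)

definition "KF X Y Z = gm (N X Y) Z - (1/2) * gm (br X Y) Z + (1/2) * gm (br Y Z) X - (1/2) * gm (br Z X) Y"

lemma KF_lin1: "linear (\<lambda>X. KF X Y Z)"
  unfolding KF_def by (rule linearI) (simp_all add: gmsimps Nsimps brsimps algebra_simps)
lemma KF_lin2: "linear (\<lambda>Y. KF X Y Z)"
  unfolding KF_def by (rule linearI) (simp_all add: gmsimps Nsimps brsimps algebra_simps)
lemma KF_lin3: "linear (\<lambda>Z. KF X Y Z)"
  unfolding KF_def by (rule linearI) (simp_all add: gmsimps Nsimps brsimps algebra_simps)

definition "iscomp x \<longleftrightarrow> x \<in> pp \<or> (\<exists>i<m. x \<in> kk i)"

lemma brk: "j < m \<Longrightarrow> x \<in> kk j \<Longrightarrow> x \<in> kp" using comp_sub(2) by blast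

lemma KF_PPP: "x \<in> pp \<Longrightarrow> y \<in> pp \<Longrightarrow> z \<in> pp \<Longrightarrow> KF x y z = 0"
  unfolding KF_def using N_par_pp[of x y] br_pp
  by (simp add: gm_p2 gm_p Q_kp)

lemma KF_PPK: "c < m \<Longrightarrow> x \<in> pp \<Longrightarrow> y \<in> pp \<Longrightarrow> z \<in> kk c \<Longrightarrow> KF x y z = 0"
proof -
  assume c: "c < m" and x: "x \<in> pp" and y: "y \<in> pp" and z: "z \<in> kk c"
  have zk: "z \<in> kp" using brk[OF c z] .
  have "Q (br y z) x = Q (br z x) y"
    using Q_krule[OF zk, of y x] anti[of z y] Qf.sym[of x "br z x"] by (simp add: Qf.lneg Qf.sym[of y])
  then show ?thesis unfolding KF_def N_pp[OF x y]
    using gm_k2[OF c z] gm_p2[OF x] gm_p2[OF y] by (simp add: Qf.lmul algebra_simps)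
qed

lemma KF_PKP: "b < m \<Longrightarrow> x \<in> pp \<Longrightarrow> y \<in> kk b \<Longrightarrow> z \<in> pp \<Longrightarrow> KF x y z = 0"
proof -
  assume b: "b < m" and x: "x \<in> pp" and y: "y \<in> kk b" and z: "z \<in> pp"
  have yk: "y \<in> kp" using brk[OF b y] .
  define q where "q = Q (br x y) z"
  have F1: "Q (br y z) x = q"
    using Q_krule[OF yk, of z x] anti[of y x] by (simp add: q_def Qf.rneg Qf.sym[of z])
  have F2: "Q (br z x) y = - q"
    using Q_prule[OF x, of y z] anti[of x z] by (simp add: q_def Qf.rneg Qf.sym[of y])
  have "KF x y z = \<beta> * (- (\<alpha> b / (2 * \<beta>))) * q - (1/2) * (\<beta> * q) + (1/2) * (\<beta> * Q (br y z) x)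
      - (1/2) * (\<alpha> b * Q (br z x) y)"
    unfolding KF_def N_pk[OF b x y] using gm_p2[OF z] gm_p2[OF x] gm_k2[OF b y]
    by (simp add: Qf.lmul Qf.lneg q_def)
  also have "\<dots> = 0" unfolding F1 F2 using beta_pos by (simp add: field_simps)
  finally show ?thesis .
qed

lemma KF_PKK: "b < m \<Longrightarrow> c < m \<Longrightarrow> x \<in> pp \<Longrightarrow> y \<in> kk b \<Longrightarrow> z \<in> kk c \<Longrightarrow> KF x y z = 0"
proof -
  assume b: "b < m" and c: "c < m" and x: "x \<in> pp" and y: "y \<in> kk b" and z: "z \<in> kk c"
  have yk: "y \<in> kp" using brk[OF b y] .
  have zk: "z \<in> kp" using brk[OF c z] .
  show ?thesis unfolding KF_def
    using gm_k2[OF c z] gm_p2[OF x] gm_k2[OF b y] N_par_pk[OF x yk] br_pk[OF x yk] br_kk[OF yk zk]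
      br_kp[OF zk x] Q_pk zk yk Q_kp x by simp
qed

lemma KF_KPP: "a < m \<Longrightarrow> x \<in> kk a \<Longrightarrow> y \<in> pp \<Longrightarrow> z \<in> pp \<Longrightarrow> KF x y z = 0"
proof -
  assume a: "a < m" and x: "x \<in> kk a" and y: "y \<in> pp" and z: "z \<in> pp"
  have xk: "x \<in> kp" using brk[OF a x] .
  define q where "q = Q (br x y) z"
  have F3: "Q (br y z) x = - q"
    using Q_prule[OF y, of z x] anti[of y x] by (simp add: q_def Qf.rneg Qf.sym[of z])
  have F4: "Q (br z x) y = q"
    using Q_krule[OF xk, of y z] anti[of x z] by (simp add: q_def Qf.rneg Qf.sym[of y])
  have "KF x y z = \<beta> * (1 + \<alpha> a / (2 * \<beta>)) * q - (1/2) * (\<beta> * q) + (1/2) * (\<alpha> a * Q (br y z) x)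
      - (1/2) * (\<beta> * Q (br z x) y)"
    unfolding KF_def N_kp[OF a x y] using gm_p2[OF z] gm_k2[OF a x] gm_p2[OF y]
    by (simp add: Qf.lmul q_def)
  also have "\<dots> = 0" unfolding F3 F4 using beta_pos by (simp add: field_simps)
  finally show ?thesis .
qed

lemma KF_KPK: "a < m \<Longrightarrow> c < m \<Longrightarrow> x \<in> kk a \<Longrightarrow> y \<in> pp \<Longrightarrow> z \<in> kk c \<Longrightarrow> KF x y z = 0"
proof -
  assume a: "a < m" and c: "c < m" and x: "x \<in> kk a" and y: "y \<in> pp" and z: "z \<in> kk c"
  have xk: "x \<in> kp" using brk[OF a x] .
  have zk: "z \<in> kp" using brk[OF c z] .
  show ?thesis unfolding KF_def
    using gm_k2[OF c z] gm_k2[OF a x] gm_p2[OF y] N_par_kp[OF xk y] br_kp[OF xk y] br_pk[OF y zk]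
      br_kk[OF zk xk] Q_pk zk xk Q_kp y by simp
qed

lemma KF_KKP: "a < m \<Longrightarrow> b < m \<Longrightarrow> x \<in> kk a \<Longrightarrow> y \<in> kk b \<Longrightarrow> z \<in> pp \<Longrightarrow> KF x y z = 0"
proof -
  assume a: "a < m" and b: "b < m" and x: "x \<in> kk a" and y: "y \<in> kk b" and z: "z \<in> pp"
  have xk: "x \<in> kp" using brk[OF a x] .
  have yk: "y \<in> kp" using brk[OF b y] .
  show ?thesis unfolding KF_def
    using gm_p2[OF z] gm_k2[OF a x] gm_k2[OF b y] N_par_kk[OF xk yk] br_kk[OF xk yk] br_kp[OF yk z]
      br_pk[OF z xk] Q_pk z xk yk Q_kp by simp
qed

lemma KF_KKK: "a < m \<Longrightarrow> b < m \<Longrightarrow> c < m \<Longrightarrow> x \<in> kk a \<Longrightarrow> y \<in> kk b \<Longrightarrow> z \<in> kk c \<Longrightarrow> KF x y z = 0"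
proof -
  assume a: "a < m" and b: "b < m" and c: "c < m" and x: "x \<in> kk a" and y: "y \<in> kk b" and z: "z \<in> kk c"
  have xk: "x \<in> kp" using brk[OF a x] .
  have yk: "y \<in> kp" using brk[OF b y] .
  have zk: "z \<in> kp" using brk[OF c z] .
  define q where "q = Q (br x y) z"
  have F5: "Q (br y z) x = q"
    using Q_krule[OF yk, of z x] anti[of y x] by (simp add: q_def Qf.rneg Qf.sym[of z])
  have F6: "Q (br z x) y = q"
    using Q_krule[OF zk, of x y] anti[of z y] F5 by (simp add: Qf.rneg Qf.sym[of x])
  have "KF x y z = \<alpha> c * ((1/2) * q) - (1/2) * (\<alpha> c * q) + (1/2) * (\<alpha> a * Q (br y z) x)
      - (1/2) * (\<alpha> b * Q (br z x) y)"
    unfolding KF_def N_kk[OF xk yk] using gm_k2[OF c z] gm_k2[OF a x] gm_k2[OF b y]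
    by (simp add: Qf.lmul q_def)
  also have "\<dots> = (1/2) * ((\<alpha> a - \<alpha> b) * q)" unfolding F5 F6 by (simp add: algebra_simps)
  also have "\<dots> = 0"
  proof (cases "a = b")
    case False
    have "br x y = 0" using comp_br0[OF a b False x y] .
    then show ?thesis by (simp add: q_def Qf.lzero)
  qed simp
  finally show ?thesis .
qed

lemma KF_comp:
  assumes x: "iscomp x" and y: "iscomp y" and z: "iscomp z"
  shows "KF x y z = 0"
  using x y z unfolding iscomp_def
  by (elim disjE exE conjE) (meson KF_PPP KF_PPK KF_PKP KF_PKK KF_KPP KF_KPK KF_KKP KF_KKK)+

lemma KF_zero: "KF X Y Z = 0"
proof -
  have s1: "KF X y z = 0" if "iscomp y" "iscomp z" for X y z
    by (rule vanish[OF KF_lin1]) (use KF_comp that in \<open>auto simp: iscomp_def\<close>)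
  have s2: "KF X Y z = 0" if "iscomp z" for X Y z
    by (rule vanish[OF KF_lin2]) (use s1 that in \<open>auto simp: iscomp_def\<close>)
  show ?thesis
    by (rule vanish[OF KF_lin3]) (use s2 in \<open>auto simp: iscomp_def\<close>)
qed

lemma lc_eq: "lc_conn gm br X Y = N X Y"
  unfolding lc_conn_def
proof (rule the_equality)
  show "\<forall>Z. gm (N X Y) Z = (1/2) * (gm (br X Y) Z - gm (br Y Z) X + gm (br Z X) Y)"
    using KF_zero[of X Y] by (simp add: KF_def algebra_simps)
  fix W assume W: "\<forall>Z. gm W Z = (1/2) * (gm (br X Y) Z - gm (br Y Z) X + gm (br Z X) Y)"
  have "gm (W - N X Y) Z = 0" for Z
    using W[rule_format, of Z] KF_zero[of X Y Z] by (simp add: KF_def gmsimps algebra_simps)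
  then have "W - N X Y = 0" by (rule gm_nondeg)
  then show "W = N X Y" by simp
qed

lemma lc_fun: "lc_conn gm br = N"
  using lc_eq by (intro ext) simp

lemma curv_eq: "curv gm br X Y Z = N X (N Y Z) - N Y (N X Z) - N (br X Y) Z"
  by (simp add: curv_def lc_fun)

lemma curv_lin1: "linear (\<lambda>Z. curv gm br Z X Y)"
  unfolding curv_eq by (rule linearI) (simp_all add: Nsimps brsimps algebra_simps)


end

context msetting
begin

definition "EA = Ep \<union> (\<Union>i<m. EE i)"

lemma EE_disj: "i < m \<Longrightarrow> j < m \<Longrightarrow> i \<noteq> j \<Longrightarrow> EE i \<inter> EE j = {}"
proof -
  assume i: "i < m" and j: "j < m" and ij: "i \<noteq> j"
  have "e \<notin> EE j" if e: "e \<in> EE i" for e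
  proof
    assume "e \<in> EE j"
    then have "Q e e = 0" using comp_orth[OF i j ij EE_k[OF i e] EE_k[OF j]] by blast
    then show False using Qf.onb_norm[OF onb_k[OF i] e] by simp
  qed
  then show ?thesis by blast
qed

lemma Ep_EE_disj: "i < m \<Longrightarrow> Ep \<inter> EE i = {}"
proof -
  assume i: "i < m"
  have "e \<notin> EE i" if e: "e \<in> Ep" for e
  proof
    assume "e \<in> EE i"
    then have "Q e e = 0" using Q_pk[OF Ep_p[OF e] EE_kp[OF i]] by blast
    then show False using Qf.onb_norm[OF onb_p e] by simp
  qed
  then show ?thesis by blast
qed

lemma onb_all: "onb Q UNIV EA"
  unfolding onb_def
proof (intro conjI ballI impI)
  show "finite EA" unfolding EA_def using fin_Ep fin_EE by auto
  show "EA \<subseteq> UNIV" by simp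
  show "span EA = UNIV"
  proof (rule set_eqI, rule iffI)
    fix x :: 'a
    have "Pp x \<in> span EA"
      unfolding Pp_def EA_def by (intro span_sum span_scale span_base) auto
    moreover have "Pk i x \<in> span EA" if "i < m" for i
      unfolding Pk_def EA_def using that by (intro span_sum span_scale span_base) auto
    ultimately have "Pp x + (\<Sum>i<m. Pk i x) \<in> span EA"
      by (intro span_add span_sum) auto
    then show "x \<in> span EA" using full_decomp[of x] by simp
  qed simp
  show "Q e e = 1" if "e \<in> EA" for e
    using that Qf.onb_norm[OF onb_p] Qf.onb_norm[OF onb_k] unfolding EA_def by blast
  show "Q e e' = 0" if e: "e \<in> EA" and e': "e' \<in> EA" and ne: "e \<noteq> e'" for e e'
  proof -
    consider "e \<in> Ep" | i where "i < m" "e \<in> EE i" using e unfolding EA_def by blast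
    then show ?thesis
    proof cases
      case 1
      consider "e' \<in> Ep" | j where "j < m" "e' \<in> EE j" using e' unfolding EA_def by blast
      then show ?thesis
      proof cases
        case 1 then show ?thesis using Qf.onb_orth[OF onb_p] \<open>e \<in> Ep\<close> ne by blast
      next
        case 2 then show ?thesis using Q_pk[OF Ep_p[OF \<open>e \<in> Ep\<close>] EE_kp] by blast
      qed
    next
      case 2
      consider "e' \<in> Ep" | j where "j < m" "e' \<in> EE j" using e' unfolding EA_def by blast
      then show ?thesis
      proof cases
        case 1 then show ?thesis using Q_kp[OF EE_kp[OF 2] Ep_p] by blast
      next
        case (2 j)
        show ?thesis
        proof (cases "i = j")
          case True then show ?thesis using Qf.onb_orth[OF onb_k[OF \<open>i < m\<close>]] \<open>e \<in> EE i\<close> 2 ne by blast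
        next
          case False then show ?thesis using comp_orth[OF \<open>i < m\<close> 2(1) False EE_k EE_k] \<open>e \<in> EE i\<close> 2 \<open>i < m\<close> by blast
        qed
      qed
    qed
  qed
qed

lemma trace_split:
  assumes f: "linear f"
  shows "trace_on UNIV f = (\<Sum>e\<in>Ep. Q (f e) e) + (\<Sum>i<m. \<Sum>e\<in>EE i. Q (f e) e)"
proof -
  have "trace_on UNIV f = (\<Sum>e\<in>EA. Q (f e) e)" by (rule Qf.trace_onb[OF onb_all f]) simp
  also have "\<dots> = (\<Sum>e\<in>Ep. Q (f e) e) + (\<Sum>e\<in>(\<Union>i<m. EE i). Q (f e) e)"
    unfolding EA_def by (rule sum.union_disjoint) (use fin_Ep fin_EE Ep_EE_disj in auto)
  also have "(\<Sum>e\<in>(\<Union>i<m. EE i). Q (f e) e) = (\<Sum>i<m. \<Sum>e\<in>EE i. Q (f e) e)"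
    by (rule sum.UNION_disjoint) (use fin_EE EE_disj in auto)
  finally show ?thesis .
qed

definition "tt e X Y = Q (br e X) (br e Y)"

lemma tt_eq: "Y \<in> kp \<Longrightarrow> tt e X Y = - Q (br Y (br X e)) e"
proof -
  assume Y: "Y \<in> kp"
  have "tt e X Y = Q (br X e) (br Y e)" unfolding tt_def using anti[of e X] anti[of e Y]
    by (simp add: Qf.lneg Qf.rneg)
  also have "\<dots> = Q (br Y e) (br X e)" by (rule Qf.sym)
  also have "\<dots> = - Q e (br Y (br X e))" by (rule Q_krule[OF Y])
  finally show ?thesis by (simp add: Qf.sym)
qed

lemma tt_all: "X \<in> kp \<Longrightarrow> Y \<in> kp \<Longrightarrow>
  (\<Sum>e\<in>Ep. tt e X Y) + (\<Sum>i<m. \<Sum>e\<in>EE i. tt e X Y) = Q X Y"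
proof -
  assume X: "X \<in> kp" and Y: "Y \<in> kp"
  have "killing br Y X = (\<Sum>e\<in>Ep. Q (br Y (br X e)) e) + (\<Sum>i<m. \<Sum>e\<in>EE i. Q (br Y (br X e)) e)"
    unfolding killing_on_def by (rule trace_split[OF lin_adad])
  moreover have "killing br Y X = - Q Y X" using Q_k[OF X, of Y] by simp
  moreover have "(\<Sum>e\<in>Ep. tt e X Y) + (\<Sum>i<m. \<Sum>e\<in>EE i. tt e X Y) =
     - ((\<Sum>e\<in>Ep. Q (br Y (br X e)) e) + (\<Sum>i<m. \<Sum>e\<in>EE i. Q (br Y (br X e)) e))"
    by (simp add: tt_eq[OF Y] sum_negf)
  ultimately show ?thesis by (simp add: Qf.sym[of Y])
qed

lemma tt_own: "j < m \<Longrightarrow> X \<in> kk j \<Longrightarrow> Y \<in> kk j \<Longrightarrow> (\<Sum>e\<in>EE j. tt e X Y) = \<kappa> j * Q X Y"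
proof -
  assume j: "j < m" and X: "X \<in> kk j" and Y: "Y \<in> kk j"
  have Xk: "X \<in> kp" and Yk: "Y \<in> kp" using brk[OF j] X Y by auto
  have "killing_on br (kk j) Y X = (\<Sum>e\<in>EE j. Q (br Y (br X e)) e)"
    unfolding killing_on_def
    by (rule Qf.trace_onb[OF onb_k[OF j] lin_adad]) (use comp_ideal[OF j] Xk Yk in blast)
  moreover have "killing_on br (kk j) Y X = \<kappa> j * killing br Y X" using kappa j X Y by simp
  moreover have "killing br Y X = - Q Y X" using Q_k[OF Xk, of Y] by simp
  ultimately show ?thesis using tt_eq[OF Yk]
    by (simp add: sum_negf Qf.sym[of Y])
qed

lemma tt_other: "l < m \<Longrightarrow> j < m \<Longrightarrow> l \<noteq> j \<Longrightarrow> X \<in> kk j \<Longrightarrow> e \<in> EE l \<Longrightarrow> tt e X Y = 0"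
  unfolding tt_def using comp_br0 EE_k by (simp add: Qf.lzero)

lemma tt_other2: "l < m \<Longrightarrow> j < m \<Longrightarrow> l \<noteq> j \<Longrightarrow> Y \<in> kk j \<Longrightarrow> e \<in> EE l \<Longrightarrow> tt e X Y = 0"
  unfolding tt_def using comp_br0 EE_k by (simp add: Qf.rzero)

lemma tt_ksum: "j < m \<Longrightarrow> X \<in> kk j \<Longrightarrow> Y \<in> kk j \<Longrightarrow> (\<Sum>l<m. \<Sum>e\<in>EE l. tt e X Y) = \<kappa> j * Q X Y"
proof -
  assume j: "j < m" and X: "X \<in> kk j" and Y: "Y \<in> kk j"
  have "(\<Sum>l<m. \<Sum>e\<in>EE l. tt e X Y) = (\<Sum>e\<in>EE j. tt e X Y)"
  proof (rule sum_single)
    fix l assume "l \<in> {..<m}" "l \<noteq> j"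
    then show "(\<Sum>e\<in>EE l. tt e X Y) = 0" using tt_other[OF _ j _ X] by simp
  qed (use j in auto)
  then show ?thesis using tt_own[OF j X Y] by simp
qed

lemma tt_psum: "j < m \<Longrightarrow> X \<in> kk j \<Longrightarrow> Y \<in> kk j \<Longrightarrow> (\<Sum>e\<in>Ep. tt e X Y) = (1 - \<kappa> j) * Q X Y"
  using tt_all[of X Y] tt_ksum[of j X Y] brk by (simp add: algebra_simps)

lemma tt_ksum0: "j < m \<Longrightarrow> k < m \<Longrightarrow> j \<noteq> k \<Longrightarrow> X \<in> kk j \<Longrightarrow> Y \<in> kk k \<Longrightarrow> (\<Sum>l<m. \<Sum>e\<in>EE l. tt e X Y) = 0"
proof -
  assume j: "j < m" and k: "k < m" and jk: "j \<noteq> k" and X: "X \<in> kk j" and Y: "Y \<in> kk k"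
  have "(\<Sum>e\<in>EE l. tt e X Y) = 0" if l: "l < m" for l
  proof (cases "l = j")
    case True
    then show ?thesis using tt_other2[OF l k _ Y] jk by simp
  next
    case False
    then show ?thesis using tt_other[OF l j _ X] by simp
  qed
  then show ?thesis by simp
qed

lemma tt_psum0: "j < m \<Longrightarrow> k < m \<Longrightarrow> j \<noteq> k \<Longrightarrow> X \<in> kk j \<Longrightarrow> Y \<in> kk k \<Longrightarrow> (\<Sum>e\<in>Ep. tt e X Y) = 0"
  using tt_all[of X Y] tt_ksum0[of j k X Y] brk comp_orth by simp

end

context msetting
begin

lemma Qe0p: "e \<in> pp \<Longrightarrow> Q (br e u) e = 0"
  using Q_prule[of e u e] by (simp add: alt Qf.rzero)
lemma Qe0k: "e \<in> kp \<Longrightarrow> Q (br e u) e = 0"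
  using Q_krule[of e u e] by (simp add: alt Qf.rzero)

lemma Q_kexp: "x \<in> kp \<Longrightarrow> Q x y = (\<Sum>i<m. Q (Pk i x) (Pk i y))"
proof -
  assume x: "x \<in> kp"
  have "Q x y = Q (\<Sum>i<m. Pk i x) y" using k_decomp[OF x] by simp
  also have "\<dots> = (\<Sum>i<m. Q (Pk i x) y)" by (simp add: Qf.lsum)
  also have "\<dots> = (\<Sum>i<m. Q (Pk i x) (Pk i y))" by (rule sum.cong[OF refl]) (rule Q_Pk, simp)
  finally show ?thesis .
qed

lemma Q_N_pk_e: "e \<in> pp \<Longrightarrow> w \<in> kp \<Longrightarrow> Q (N e w) e = 0"
  using Qe0p[of e] by (simp add: N_pkgen Qf.Qsimps)

lemma ricci_split: "ricci gm br X Y =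
   (\<Sum>e\<in>Ep. Q (curv gm br e X Y) e) + (\<Sum>i<m. \<Sum>e\<in>EE i. Q (curv gm br e X Y) e)"
  unfolding ricci_def by (rule trace_split[OF curv_lin1])

lemma RP_p:
  assumes e: "e \<in> pp" and X: "X \<in> pp" and Y: "Y \<in> pp"
  shows "Q (curv gm br e X Y) e =
    - (\<Sum>i<m. (1 + 3 * \<alpha> i / (4 * \<beta>)) * Q (Pk i (br e X)) (Pk i (br e Y)))"
proof -
  define A where "A = br e X"
  define Bv where "Bv = br e Y"
  define si where "si i = Q (Pk i A) (Pk i Bv)" for i
  have Ak: "A \<in> kp" and Bk: "Bv \<in> kp" using br_pp e X Y by (auto simp: A_def Bv_def)
  have QBA: "Q Bv A = (\<Sum>i<m. si i)" using Q_kexp[OF Bk, of A] by (simp add: si_def Qf.sym)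
  have QPBA: "Q (Pk i Bv) A = si i" if "i < m" for i using Q_Pk[OF that, of Bv A] by (simp add: si_def Qf.sym)
  have QBPA: "Q Bv (Pk i A) = si i" if "i < m" for i using Q_Pk'[OF that, of Bv A] by (simp add: si_def Qf.sym)
  have a: "Q (N e (N X Y)) e = 0"
    using Q_N_pk_e[OF e N_par_pp[OF X Y]] .
  have sw1: "Q (br X u) e = - Q u A" for u
    using Q_prule[OF X, of u e] anti[of X e] by (simp add: A_def Qf.rneg)
  have b0: "Q (N X Bv) e = (\<Sum>i<m. (cc i - 1/2) * si i)"
  proof -
    have "Q (N X Bv) e = (1/2) * Q (br X Bv) e - (\<Sum>i<m. cc i * Q (br X (Pk i Bv)) e)"
      by (simp add: N_pkgen[OF X Bk] Qf.Qsimps)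
    also have "\<dots> = - (1/2) * (\<Sum>i<m. si i) + (\<Sum>i<m. cc i * si i)"
      using QBA QPBA by (simp add: sw1 sum_negf)
    also have "\<dots> = (\<Sum>i<m. (cc i - 1/2) * si i)"
      by (simp add: sum_distrib_left left_diff_distrib sum_subtractf sum_negf)
    finally show ?thesis .
  qed
  have b: "Q (N X (N e Y)) e = (1/2) * (\<Sum>i<m. (cc i - 1/2) * si i)"
    using b0 by (simp add: N_pp[OF e Y] Nsimps Qf.lmul Bv_def)
  have sw2: "Q (br u Y) e = Q Bv u" if u: "u \<in> kp" for u
  proof -
    have "Q (br u Y) e = - Q Y (br u e)" by (rule Q_krule[OF u])
    also have "\<dots> = Q Y (br e u)" using anti[of u e] by (simp add: Qf.rneg)
    also have "\<dots> = Q Bv u" using Q_prule[OF e, of Y u] by (simp add: Bv_def)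
    finally show ?thesis .
  qed
  have c: "Q (N (br e X) Y) e = (\<Sum>i<m. (1/2 + cc i) * si i)"
  proof -
    have "Q (N A Y) e = (1/2) * Q (br A Y) e + (\<Sum>i<m. cc i * Q (br (Pk i A) Y) e)"
      by (simp add: N_kpgen[OF Ak Y] Qf.Qsimps)
    also have "\<dots> = (1/2) * (\<Sum>i<m. si i) + (\<Sum>i<m. cc i * si i)"
      using QBA QBPA sw2[OF Ak] sw2[OF Pk_kp] by simp
    also have "\<dots> = (\<Sum>i<m. (1/2 + cc i) * si i)"
      by (simp add: sum_distrib_left distrib_right sum.distrib)
    finally show ?thesis by (simp add: A_def)
  qed
  have "Q (curv gm br e X Y) e = - ((1/2) * (\<Sum>i<m. (cc i - 1/2) * si i)) - (\<Sum>i<m. (1/2 + cc i) * si i)"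
    unfolding curv_eq using a b c by (simp add: Qf.Qsimps)
  also have "\<dots> = - (\<Sum>i<m. (1 + 3 * \<alpha> i / (4 * \<beta>)) * si i)"
  proof -
    have "- ((1/2) * (\<Sum>i<m. (cc i - 1/2) * si i)) - (\<Sum>i<m. (1/2 + cc i) * si i)
        = - (\<Sum>i<m. (1/2) * ((cc i - 1/2) * si i) + (1/2 + cc i) * si i)"
      by (simp add: sum_distrib_left sum.distrib)
    also have "\<dots> = - (\<Sum>i<m. (1 + 3 * \<alpha> i / (4 * \<beta>)) * si i)"
      using beta_pos by (intro arg_cong[where f = uminus] sum.cong refl) (simp add: cc_def field_simps)
    finally show ?thesis .
  qed
  finally show ?thesis by (simp add: si_def A_def Bv_def)
qed

lemma RP_k:
  assumes j: "j < m" and e: "e \<in> kk j" and X: "X \<in> pp" and Y: "Y \<in> pp"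
  shows "Q (curv gm br e X Y) e = \<alpha> j / (4 * \<beta>) * tt e X Y"
proof -
  have ek: "e \<in> kp" using brk[OF j e] .
  have a: "Q (N e (N X Y)) e = 0"
    using N_kk[OF ek N_par_pp[OF X Y]] Qe0k[OF ek] by (simp add: Qf.lmul)
  have D: "br e Y \<in> pp" using br_kp[OF ek Y] .
  have q1: "Q (br X (br e Y)) e = - tt e X Y"
    using Q_prule[OF X, of "br e Y" e] anti[of X e] by (simp add: tt_def Qf.rneg Qf.sym[of "br e Y"])
  have b: "Q (N X (N e Y)) e = (1 + \<alpha> j / (2 * \<beta>)) * (1/2) * (- tt e X Y)"
    using q1 by (simp add: N_kp[OF j e Y] Nsimps N_pp[OF X D] Qf.lmul)
  have EX: "br e X \<in> pp" using br_kp[OF ek X] .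
  have q2: "Q (br (br e X) Y) e = tt e X Y"
  proof -
    have "Q (br (br e X) Y) e = Q Y (br (br e X) e)" by (rule Q_prule[OF EX])
    also have "\<dots> = - Q Y (br e (br e X))" using anti[of "br e X" e] by (simp add: Qf.rneg)
    also have "Q Y (br e (br e X)) = - Q (br e Y) (br e X)" using Q_krule[OF ek, of Y "br e X"] by simp
    finally show ?thesis by (simp add: tt_def Qf.sym[of "br e Y"])
  qed
  have c: "Q (N (br e X) Y) e = (1/2) * tt e X Y"
    using q2 by (simp add: N_pp[OF EX Y] Qf.lmul)
  have "Q (curv gm br e X Y) e = Q (N e (N X Y)) e - Q (N X (N e Y)) e - Q (N (br e X) Y) e"
    by (simp add: curv_eq Qf.lsub)
  also have "\<dots> = 0 - (1 + \<alpha> j / (2 * \<beta>)) * (1/2) * (- tt e X Y) - (1/2) * tt e X Y"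
    by (simp only: a b c)
  also have "\<dots> = \<alpha> j / (4 * \<beta>) * tt e X Y" using beta_pos by (simp add: field_simps)
  finally show ?thesis .
qed

lemma RK_p:
  assumes j: "j < m" and k: "k < m" and e: "e \<in> pp" and X: "X \<in> kk j" and Y: "Y \<in> kk k"
  shows "Q (curv gm br e X Y) e = \<alpha> j * \<alpha> k / (4 * \<beta>\<^sup>2) * tt e X Y"
proof -
  have Xk: "X \<in> kp" using brk[OF j X] .
  have Yk: "Y \<in> kp" using brk[OF k Y] .
  have a: "Q (N e (N X Y)) e = 0" using Q_N_pk_e[OF e N_par_kk[OF Xk Yk]] .
  have D: "br e Y \<in> pp" using br_pk[OF e Yk] .
  have q1: "Q (br X (br e Y)) e = tt e X Y"
  proof -
    have "Q (br X (br e Y)) e = - Q (br e Y) (br X e)" by (rule Q_krule[OF Xk])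
    also have "\<dots> = Q (br e Y) (br e X)" using anti[of X e] by (simp add: Qf.rneg)
    finally show ?thesis by (simp add: tt_def Qf.sym[of "br e Y"])
  qed
  have b: "Q (N X (N e Y)) e = (- (\<alpha> k / (2 * \<beta>))) * (1 + \<alpha> j / (2 * \<beta>)) * tt e X Y"
    using q1 by (simp add: N_pk[OF k e Y] Nsimps N_kp[OF j X D] Qf.lmul Qf.lneg)
  have EX: "br e X \<in> pp" using br_pk[OF e Xk] .
  have q2: "Q (br (br e X) Y) e = - tt e X Y"
  proof -
    have "Q (br (br e X) Y) e = Q Y (br (br e X) e)" by (rule Q_prule[OF EX])
    also have "\<dots> = - Q Y (br e (br e X))" using anti[of "br e X" e] by (simp add: Qf.rneg)
    also have "Q Y (br e (br e X)) = Q (br e Y) (br e X)" using Q_prule[OF e, of Y "br e X"] by simp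
    finally show ?thesis by (simp add: tt_def Qf.sym[of "br e Y"])
  qed
  have c: "Q (N (br e X) Y) e = (- (\<alpha> k / (2 * \<beta>))) * (- tt e X Y)"
    using q2 by (simp add: N_pk[OF k EX Y] Qf.lmul Qf.lneg)
  have "Q (curv gm br e X Y) e = Q (N e (N X Y)) e - Q (N X (N e Y)) e - Q (N (br e X) Y) e"
    by (simp add: curv_eq Qf.lsub)
  also have "\<dots> = 0 - (- (\<alpha> k / (2 * \<beta>))) * (1 + \<alpha> j / (2 * \<beta>)) * tt e X Y
      - (- (\<alpha> k / (2 * \<beta>))) * (- tt e X Y)"
    by (simp only: a b c)
  also have "\<dots> = \<alpha> j * \<alpha> k / (4 * \<beta>\<^sup>2) * tt e X Y" using beta_pos
    by (simp add: field_simps power2_eq_square)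
  finally show ?thesis .
qed

lemma RK_k:
  assumes e: "e \<in> kp" and X: "X \<in> kp" and Y: "Y \<in> kp"
  shows "Q (curv gm br e X Y) e = (1/4) * tt e X Y"
proof -
  have a: "Q (N e (N X Y)) e = 0"
    using N_kk[OF e N_par_kk[OF X Y]] Qe0k[OF e] by (simp add: Qf.lmul)
  have q1: "Q (br X (br e Y)) e = tt e X Y"
  proof -
    have "Q (br X (br e Y)) e = - Q (br e Y) (br X e)" by (rule Q_krule[OF X])
    also have "\<dots> = Q (br e Y) (br e X)" using anti[of X e] by (simp add: Qf.rneg)
    finally show ?thesis by (simp add: tt_def Qf.sym[of "br e Y"])
  qed
  have b: "Q (N X (N e Y)) e = (1/4) * tt e X Y"
    using q1 br_kk[OF e Y] by (simp add: N_kk[OF e Y] Nsimps N_kk[OF X] Qf.lmul)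
  have EX: "br e X \<in> kp" using br_kk[OF e X] .
  have q2: "Q (br (br e X) Y) e = - tt e X Y"
  proof -
    have "Q (br (br e X) Y) e = - Q Y (br (br e X) e)" by (rule Q_krule[OF EX])
    also have "\<dots> = Q Y (br e (br e X))" using anti[of "br e X" e] by (simp add: Qf.rneg)
    also have "Q Y (br e (br e X)) = - Q (br e Y) (br e X)" using Q_krule[OF e, of Y "br e X"] by simp
    finally show ?thesis by (simp add: tt_def Qf.sym[of "br e Y"])
  qed
  have c: "Q (N (br e X) Y) e = (1/2) * (- tt e X Y)"
    using q2 by (simp add: N_kk[OF EX Y] Qf.lmul)
  have "Q (curv gm br e X Y) e = Q (N e (N X Y)) e - Q (N X (N e Y)) e - Q (N (br e X) Y) e"
    by (simp add: curv_eq Qf.lsub)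
  also have "\<dots> = 0 - (1/4) * tt e X Y - (1/2) * (- tt e X Y)"
    by (simp only: a b c)
  also have "\<dots> = (1/4) * tt e X Y" by simp
  finally show ?thesis .
qed

lemma R_mixed:
  assumes X: "X \<in> pp" and Y: "Y \<in> kp" and e: "e \<in> pp \<or> e \<in> kp"
  shows "Q (curv gm br e X Y) e = 0"
  using e
proof
  assume e: "e \<in> pp"
  have "curv gm br e X Y \<in> kp" unfolding curv_eq
    using N_par_pp[OF e N_par_pk[OF X Y]] N_par_pp[OF X N_par_pk[OF e Y]] N_par_kk[OF br_pp[OF e X] Y] sub_k
    by (intro subspace_diff) auto
  then show ?thesis using Q_kp[OF _ e] by blast
next
  assume e: "e \<in> kp"
  have "curv gm br e X Y \<in> pp" unfolding curv_eq
    using N_par_kp[OF e N_par_pk[OF X Y]] N_par_pk[OF X N_par_kk[OF e Y]] N_par_pk[OF br_kp[OF e X] Y] sub_p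
    by (intro subspace_diff) auto
  then show ?thesis using Q_pk[OF _ e] by blast
qed

end

lemma quad_zero:
  fixes a b :: real
  assumes h: "\<And>t. 0 \<le> 2 * t * b + t\<^sup>2 * a"
  shows "b = 0"
proof (rule ccontr)
  assume b: "b \<noteq> 0"
  define u where "u = \<bar>a\<bar> + 1"
  have u: "u > 0" by (simp add: u_def)
  define t where "t = - b / u"
  have "2 * t * b + t\<^sup>2 * a = b\<^sup>2 * (a - 2 * u) / u\<^sup>2"
    using u by (simp add: t_def field_simps power2_eq_square)
  moreover have "a - 2 * u < 0" unfolding u_def by (cases "a \<ge> 0") auto
  moreover have "b\<^sup>2 > 0" using b by simp
  ultimately have "2 * t * b + t\<^sup>2 * a < 0"
    using u by (simp add: divide_neg_pos mult_pos_neg)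
  then show False using h[of t] by simp
qed

context msetting
begin

lemma irred:
  assumes sV: "subspace V" and Vp: "V \<subseteq> pp" and V0: "V \<noteq> {0}"
    and inv: "\<And>Z v. Z \<in> kp \<Longrightarrow> v \<in> V \<Longrightarrow> br Z v \<in> V"
  shows "V = pp"
proof -
  define W where "W = {w \<in> pp. \<forall>v\<in>V. Q w v = 0}"
  have split: "\<exists>v\<in>V. x - v \<in> W" if x: "x \<in> pp" for x
  proof -
    obtain v where v: "v \<in> V" "\<forall>y\<in>V. Q (x - v) y = 0" using Qf.proj_exists[OF sV] by blast
    have "x - v \<in> pp" using x v Vp sub_p by (auto intro: subspace_diff)
    then show ?thesis using v unfolding W_def by blast
  qed
  have VW0: "br v w = 0" if v: "v \<in> V" and w: "w \<in> W" for v w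
  proof -
    have vp: "v \<in> pp" and wp: "w \<in> pp" using v w Vp unfolding W_def by auto
    have bk: "br v w \<in> kp" using br_pp[OF vp wp] .
    have "Q (br v w) Z = 0" if Z: "Z \<in> kp" for Z
    proof -
      have "Q (br v w) Z = Q w (br v Z)" by (rule Q_prule[OF vp])
      also have "\<dots> = - Q w (br Z v)" using anti[of v Z] by (simp add: Qf.rneg)
      also have "Q w (br Z v) = 0" using w inv[OF Z v] unfolding W_def by blast
      finally show ?thesis by simp
    qed
    then show ?thesis using bk Qf.zero_iff by blast
  qed
  have perpV: "x \<in> V" if x: "x \<in> pp" and xw: "\<forall>w\<in>W. Q x w = 0" for x
  proof -
    obtain v where v: "v \<in> V" "x - v \<in> W" using split[OF x] by blast
    have "Q (x - v) (x - v) = Q x (x - v) - Q v (x - v)" by (simp add: Qf.lsub)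
    also have "Q x (x - v) = 0" using xw v by blast
    also have "Q v (x - v) = 0" using v unfolding W_def by (auto simp: Qf.sym[of v])
    finally have "x - v = 0" by (simp add: Qf.zero_iff)
    then show ?thesis using v by simp
  qed
  define BV where "BV = {br a c | a c. a \<in> V \<and> c \<in> V}"
  have BVm: "br a c \<in> BV" if "a \<in> V" "c \<in> V" for a c unfolding BV_def using that by blast
  have BVk: "span BV \<subseteq> kp"
    using Vp br_pp sub_k unfolding BV_def by (intro span_minimal) auto
  have kBV: "br Z b \<in> span BV" if Z: "Z \<in> kp" and b: "b \<in> span BV" for Z b
  proof -
    have "subspace {y. br Z y \<in> span BV}" by (rule subspace_pre[OF lin_ad subspace_span])
    moreover have "BV \<subseteq> {y. br Z y \<in> span BV}"
    proof
      fix g assume "g \<in> BV"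
      then obtain a c where g: "g = br a c" "a \<in> V" "c \<in> V" unfolding BV_def by blast
      have "br Z g = br (br Z a) c + br a (br Z c)" unfolding g(1) by (rule jacobi2)
      moreover have "br (br Z a) c \<in> BV" by (rule BVm[OF inv[OF Z g(2)] g(3)])
      moreover have "br a (br Z c) \<in> BV" by (rule BVm[OF g(2) inv[OF Z g(3)]])
      ultimately show "g \<in> {y. br Z y \<in> span BV}" by (auto intro: span_add span_base)
    qed
    ultimately have "span BV \<subseteq> {y. br Z y \<in> span BV}" by (rule span_minimal[rotated])
    then show ?thesis using b by blast
  qed
  have vBV: "br v b \<in> V" if v: "v \<in> V" and b: "b \<in> span BV" for v b
  proof -
    have vp: "v \<in> pp" using v Vp by blast
    have "subspace {y. br v y \<in> V}" by (rule subspace_pre[OF lin_ad sV])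
    moreover have "BV \<subseteq> {y. br v y \<in> V}"
    proof
      fix g assume "g \<in> BV"
      then obtain a c where g: "g = br a c" "a \<in> V" "c \<in> V" unfolding BV_def by blast
      have gk: "g \<in> kp" using g Vp br_pp by blast
      have "br v g \<in> pp" using br_pk[OF vp gk] .
      moreover have "Q (br v g) w = 0" if w: "w \<in> W" for w
        using Q_prule[OF vp, of g w] VW0[OF v w] by (simp add: Qf.rzero)
      ultimately show "g \<in> {y. br v y \<in> V}" using perpV by blast
    qed
    ultimately have "span BV \<subseteq> {y. br v y \<in> V}" by (rule span_minimal[rotated])
    then show ?thesis using b by blast
  qed
  have wBV: "br w b = 0" if w: "w \<in> W" and b: "b \<in> span BV" for w b
  proof -
    have "subspace {y. br w y = 0}" using subspace_pre[OF lin_ad[of w] subspace_single_0] by simp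
    moreover have "BV \<subseteq> {y. br w y = 0}"
    proof
      fix g assume "g \<in> BV"
      then obtain a c where g: "g = br a c" "a \<in> V" "c \<in> V" unfolding BV_def by blast
      have "br w g = br (br w a) c + br a (br w c)" unfolding g(1) by (rule jacobi2)
      moreover have "br w a = 0" using VW0[OF g(2) w] anti[of a w] by simp
      moreover have "br w c = 0" using VW0[OF g(3) w] anti[of c w] by simp
      ultimately show "g \<in> {y. br w y = 0}" by (simp add: lzero rzero)
    qed
    ultimately have "span BV \<subseteq> {y. br w y = 0}" by (rule span_minimal[rotated])
    then show ?thesis using b by blast
  qed
  define I where "I = {v + b | v b. v \<in> V \<and> b \<in> span BV}"
  have VI: "V \<subseteq> I"
  proof
    fix v assume v: "v \<in> V"
    have "v = v + 0 \<and> v \<in> V \<and> (0::'a) \<in> span BV" using v span_zero by simp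
    then show "v \<in> I" unfolding I_def by blast
  qed
  have "ideal_of br UNIV I"
    unfolding ideal_of_def
  proof (intro conjI ballI)
    show "subspace I"
      unfolding subspace_def I_def
    proof (intro conjI ballI allI)
      have "(0::'a) = 0 + 0 \<and> (0::'a) \<in> V \<and> (0::'a) \<in> span BV" using subspace_0[OF sV] span_zero by simp
      then show "0 \<in> {v + b | v b. v \<in> V \<and> b \<in> span BV}" by blast
      fix x y assume x: "x \<in> {v + b | v b. v \<in> V \<and> b \<in> span BV}" and y: "y \<in> {v + b | v b. v \<in> V \<and> b \<in> span BV}"
      then obtain v1 b1 v2 b2 where "x = v1 + b1" "v1 \<in> V" "b1 \<in> span BV" "y = v2 + b2" "v2 \<in> V" "b2 \<in> span BV" by blast
      then have "x + y = (v1 + v2) + (b1 + b2)" "v1 + v2 \<in> V" "b1 + b2 \<in> span BV"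
        using subspace_add[OF sV] span_add by (auto simp: algebra_simps)
      then show "x + y \<in> {v + b | v b. v \<in> V \<and> b \<in> span BV}" by blast
    next
      fix c :: real and x assume x: "x \<in> {v + b | v b. v \<in> V \<and> b \<in> span BV}"
      then obtain v1 b1 where "x = v1 + b1" "v1 \<in> V" "b1 \<in> span BV" by blast
      then have "c *\<^sub>R x = c *\<^sub>R v1 + c *\<^sub>R b1" "c *\<^sub>R v1 \<in> V" "c *\<^sub>R b1 \<in> span BV"
        using subspace_scale[OF sV] span_scale by (auto simp: scaleR_add_right)
      then show "c *\<^sub>R x \<in> {v + b | v b. v \<in> V \<and> b \<in> span BV}" by blast
    qed
    show "I \<subseteq> UNIV" by simp
    fix X Y assume Y: "Y \<in> I"
    then obtain v b where vb: "Y = v + b" "v \<in> V" "b \<in> span BV" unfolding I_def by blast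
    define Xk where "Xk = (1/2) *\<^sub>R (X + \<theta> X)"
    define Xp where "Xp = (1/2) *\<^sub>R (X - \<theta> X)"
    have Xk: "Xk \<in> kp" and Xp: "Xp \<in> pp" and X: "X = Xk + Xp"
      unfolding Xk_def Xp_def using decomp by auto
    obtain v' where v': "v' \<in> V" "Xp - v' \<in> W" using split[OF Xp] by blast
    define w' where "w' = Xp - v'"
    have w': "w' \<in> W" and Xp': "Xp = v' + w'" using v' by (auto simp: w'_def)
    have "br X Y = (br Xk v + br v' b) + (br Xk b + br v' v) + (br w' v + br w' b)"
      unfolding X Xp' vb by (simp add: ladd radd algebra_simps)
    also have "br w' v = 0" using VW0[OF vb(2) w'] anti[of v w'] by simp
    also have "br w' b = 0" using wBV[OF w' vb(3)] .
    finally have eq: "br X Y = (br Xk v + br v' b) + (br Xk b + br v' v)" by simp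
    have "br Xk v + br v' b \<in> V" using inv[OF Xk vb(2)] vBV[OF v'(1) vb(3)] subspace_add[OF sV] by blast
    moreover have "br Xk b + br v' v \<in> span BV"
    proof (rule span_add)
      show "br Xk b \<in> span BV" using kBV[OF Xk vb(3)] .
      have "br v' v \<in> BV" by (rule BVm[OF v'(1) vb(2)])
      then show "br v' v \<in> span BV" by (rule span_base)
    qed
    ultimately show "br X Y \<in> I" unfolding eq I_def by blast
  qed
  then have "I = {0} \<or> I = UNIV" using simple by (simp add: simple_alg_def)
  moreover have "I \<noteq> {0}" using VI V0 subspace_0[OF sV] by blast
  ultimately have IU: "I = UNIV" by simp
  have W0: "w = 0" if w: "w \<in> W" for w
  proof -
    have "w \<in> I" using IU by simp
    then obtain v b where vb: "w = v + b" "v \<in> V" "b \<in> span BV" unfolding I_def by blast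
    have bw: "b = w - v" using vb by simp
    have wp: "w \<in> pp" using w unfolding W_def by blast
    have vp: "v \<in> pp" using vb(2) Vp by blast
    have "w - v \<in> pp" by (rule subspace_diff[OF sub_p wp vp])
    then have bp: "b \<in> pp" using bw by simp
    have "b \<in> kp" using vb BVk by blast
    then have "b = 0" using pk_zero[OF bp] by simp
    then have "w \<in> V" using vb by simp
    then have "Q w w = 0" using w unfolding W_def by blast
    then show ?thesis by (simp add: Qf.zero_iff)
  qed
  show ?thesis
  proof
    show "V \<subseteq> pp" by (rule Vp)
    show "pp \<subseteq> V"
    proof
      fix x assume x: "x \<in> pp"
      obtain v where v: "v \<in> V" "x - v \<in> W" using split[OF x] by blast
      then have "x - v = 0" using W0 by blast
      then show "x \<in> V" using v by simp
    qed
  qed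
qed

end

lemma skew_sum:
  fixes a h :: "'b \<Rightarrow> 'b \<Rightarrow> real"
  assumes A: "finite A" and a: "\<And>x y. a y x = - a x y" and h: "\<And>x y. h y x = h x y"
  shows "(\<Sum>x\<in>A. \<Sum>y\<in>A. a x y * h x y) = 0"
proof -
  let ?S = "\<Sum>x\<in>A. \<Sum>y\<in>A. a x y * h x y"
  have "?S = (\<Sum>y\<in>A. \<Sum>x\<in>A. a x y * h x y)" by (rule sum.swap)
  also have "\<dots> = (\<Sum>y\<in>A. \<Sum>x\<in>A. - (a y x * h y x))"
  proof (intro sum.cong refl)
    fix x y
    have "a x y * h x y = - (a y x * h y x)" using a[of x y] h[of x y] by simp
    then show "a x y * h x y = - (a y x * h y x)" .
  qed
  also have "\<dots> = - ?S" by (simp add: sum_negf)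
  finally show ?thesis by simp
qed

context msetting
begin

lemma p_ne: "pp \<noteq> {0}"
proof
  assume p0: "pp = {0}"
  have "killing br X X < 0" if X: "X \<noteq> 0" for X
  proof -
    have z: "(1/2) *\<^sub>R (X - \<theta> X) = 0" using decomp2[of X] p0 by blast
    have e: "X = (1/2) *\<^sub>R (X + \<theta> X) + (1/2) *\<^sub>R (X - \<theta> X)" by (rule decomp3)
    have "X = (1/2) *\<^sub>R (X + \<theta> X)" using e unfolding z by simp
    then have "X \<in> kp" by (rule ssubst) (rule decomp1)
    then have "Q X X = - killing br X X" by (rule Q_k)
    then show ?thesis using Qf.pos[OF X] by simp
  qed
  then show False using noncompact by blast
qed

lemma n_pos: "dim pp > 0"
  using p_ne sub_p dim_eq_0[of pp] subspace_0[OF sub_p] by auto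

lemma schur:
  assumes T: "bilinear T" and Tsym: "\<And>x y. T x y = T y x"
    and Tinv: "\<And>Z x y. Z \<in> kp \<Longrightarrow> x \<in> pp \<Longrightarrow> y \<in> pp \<Longrightarrow> T (br Z x) y + T x (br Z y) = 0"
  shows "\<exists>c. \<forall>x\<in>pp. \<forall>y\<in>pp. T x y = c * Q x y"
proof -
  have Tl: "T (x + y) z = T x z + T y z" "T z (x + y) = T z x + T z y"
    "T (c *\<^sub>R x) z = c * T x z" "T z (c *\<^sub>R x) = c * T z x" for x y z c
    using bilinear_ladd[OF T] bilinear_radd[OF T] bilinear_lmul[OF T] bilinear_rmul[OF T] by auto
  have T0: "T 0 0 = 0" using bilinear_lzero[OF T] by simp
  obtain v where v: "v \<in> pp" "v \<noteq> 0" using p_ne subspace_0[OF sub_p] by blast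
  define S where "S = sphere (0::'a) 1 \<inter> pp"
  have cS: "compact S" unfolding S_def by (intro compact_Int_closed compact_sphere closed_subspace sub_p)
  have vS: "(1 / norm v) *\<^sub>R v \<in> S" unfolding S_def using v sub_p by (auto intro: subspace_scale)
  have S0: "x \<noteq> 0" if "x \<in> S" for x using that by (auto simp: S_def)
  define f where "f x = T x x / Q x x" for x
  have cont: "continuous_on S f"
    unfolding f_def
  proof (intro continuous_on_divide ballI)
    show "continuous_on S (\<lambda>x. T x x)" by (rule bilinear_continuous_on_compose[OF continuous_on_id continuous_on_id T])
    show "continuous_on S (\<lambda>x. Q x x)" by (rule bilinear_continuous_on_compose[OF continuous_on_id continuous_on_id Qf.bil])
    fix x assume "x \<in> S" then show "Q x x \<noteq> 0" using S0 Qf.zero_iff by blast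
  qed
  obtain x0 where x0: "x0 \<in> S" "\<And>y. y \<in> S \<Longrightarrow> f x0 \<le> f y"
    using continuous_attains_inf[OF cS _ cont] vS by blast
  define lam where "lam = f x0"
  have x0p: "x0 \<in> pp" and x00: "x0 \<noteq> 0" using x0(1) S0 by (auto simp: S_def)
  have Qx0: "Q x0 x0 > 0" using Qf.pos[OF x00] .
  have Tx0: "T x0 x0 = lam * Q x0 x0" using Qx0 by (simp add: lam_def f_def)
  have ge: "lam * Q y y \<le> T y y" if y: "y \<in> pp" for y
  proof (cases "y = 0")
    case True then show ?thesis by (simp add: Qf.lzero T0)
  next
    case False
    define y' where "y' = (1 / norm y) *\<^sub>R y"
    have "y' \<in> S" unfolding S_def y'_def using y False sub_p by (auto intro: subspace_scale)
    then have "lam \<le> f y'" using x0 by (simp add: lam_def)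
    also have "f y' = f y" using False by (simp add: f_def y'_def Tl Qf.lmul Qf.rmul)
    finally have "lam \<le> T y y / Q y y" by (simp add: f_def)
    then show ?thesis using Qf.pos[OF False] by (simp add: pos_le_divide_eq)
  qed
  have crit: "T x0 w - lam * Q x0 w = 0" if w: "w \<in> pp" for w
  proof (rule quad_zero)
    fix t :: real
    have "x0 + t *\<^sub>R w \<in> pp" using x0p w sub_p by (auto intro: subspace_add subspace_scale)
    then have "0 \<le> T (x0 + t *\<^sub>R w) (x0 + t *\<^sub>R w) - lam * Q (x0 + t *\<^sub>R w) (x0 + t *\<^sub>R w)"
      using ge by smt
    also have "\<dots> = 2 * t * (T x0 w - lam * Q x0 w) + t\<^sup>2 * (T w w - lam * Q w w)"
      using Tx0 Tsym[of w x0] Qf.sym[of w x0]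
      by (simp add: Tl Qf.ladd Qf.radd Qf.lmul Qf.rmul algebra_simps power2_eq_square)
    finally show "0 \<le> 2 * t * (T x0 w - lam * Q x0 w) + t\<^sup>2 * (T w w - lam * Q w w)" .
  qed
  define V where "V = {x \<in> pp. \<forall>w\<in>pp. T x w = lam * Q x w}"
  have sV: "subspace V"
    unfolding subspace_def V_def
    using sub_p by (auto simp: Tl Qf.ladd Qf.lmul T0 Qf.lzero bilinear_lzero[OF T] algebra_simps
      intro: subspace_add subspace_scale subspace_0)
  have "V = pp"
  proof (rule irred[OF sV])
    show "V \<subseteq> pp" by (auto simp: V_def)
    have "x0 \<in> V" unfolding V_def using x0p crit by simp
    then show "V \<noteq> {0}" using x00 by blast
    fix Z x assume Z: "Z \<in> kp" and x: "x \<in> V"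
    have xp: "x \<in> pp" using x by (simp add: V_def)
    have "T (br Z x) w = lam * Q (br Z x) w" if w: "w \<in> pp" for w
    proof -
      have "T (br Z x) w = - T x (br Z w)" using Tinv[OF Z xp w] by simp
      also have "T x (br Z w) = lam * Q x (br Z w)" using x br_kp[OF Z w] by (simp add: V_def)
      also have "Q x (br Z w) = - Q (br Z x) w" using Q_krule[OF Z, of x w] by simp
      finally show ?thesis by simp
    qed
    then show "br Z x \<in> V" using br_kp[OF Z xp] by (simp add: V_def)
  qed
  then show ?thesis unfolding V_def by blast
qed

definition "Ti i X Y = (\<Sum>f\<in>EE i. tt f X Y)"

lemma Ti_bil: "bilinear (Ti i)"
  unfolding bilinear_def Ti_def tt_def
  by (auto intro!: linearI simp: brsimps Qf.Qsimps sum.distrib sum_distrib_left algebra_simps)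

lemma Ti_sym: "Ti i X Y = Ti i Y X"
  unfolding Ti_def tt_def by (simp add: Qf.sym)

lemma Ti_inv:
  assumes i: "i < m" and Z: "Z \<in> kp"
  shows "Ti i (br Z X) Y + Ti i X (br Z Y) = 0"
proof -
  define a where "a f f' = Q (br f Z) f'" for f f'
  define h where "h f f' = Q (br f' X) (br f Y) + Q (br f X) (br f' Y)" for f f'
  have ask: "a f' f = - a f f'" for f f'
  proof -
    have "a f' f = - Q (br Z f') f" using anti[of Z f'] by (simp add: a_def Qf.lneg)
    also have "\<dots> = Q f' (br Z f)" using Q_krule[OF Z, of f' f] by simp
    also have "\<dots> = - Q f' (br f Z)" using anti[of f Z] by (simp add: Qf.rneg)
    finally show ?thesis by (simp add: a_def Qf.sym[of f'])
  qed
  have hsym: "h f' f = h f f'" for f f' by (simp add: h_def)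
  have each: "tt f (br Z X) Y + tt f X (br Z Y) = (\<Sum>f'\<in>EE i. a f f' * h f f')" if f: "f \<in> EE i" for f
  proof -
    have fk: "f \<in> kk i" using EE_k[OF i f] .
    have "br Z f \<in> kk i" using comp_ideal[OF i Z fk] .
    then have fZ: "br f Z \<in> kk i" using anti[of Z f] comp_sub(1)[OF i] subspace_neg by fastforce
    have exp: "br f Z = (\<Sum>f'\<in>EE i. a f f' *\<^sub>R f')" unfolding a_def by (rule Qf.onb_expand[OF onb_k[OF i] fZ])
    have j1: "br f (br Z X) = br (br f Z) X + br Z (br f X)" by (rule jacobi2)
    have j2: "br f (br Z Y) = br (br f Z) Y + br Z (br f Y)" by (rule jacobi2)
    have canc: "Q (br Z (br f X)) (br f Y) + Q (br f X) (br Z (br f Y)) = 0"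
      using Q_krule[OF Z, of "br f X" "br f Y"] by simp
    have "tt f (br Z X) Y + tt f X (br Z Y) = Q (br (br f Z) X) (br f Y) + Q (br f X) (br (br f Z) Y)"
      unfolding tt_def j1 j2 using canc by (simp add: Qf.ladd Qf.radd)
    also have "\<dots> = (\<Sum>f'\<in>EE i. a f f' * h f f')"
      unfolding exp by (simp add: brsimps Qf.Qsimps h_def sum.distrib distrib_left)
    finally show ?thesis .
  qed
  have "Ti i (br Z X) Y + Ti i X (br Z Y) = (\<Sum>f\<in>EE i. tt f (br Z X) Y + tt f X (br Z Y))"
    by (simp add: Ti_def sum.distrib)
  also have "\<dots> = (\<Sum>f\<in>EE i. \<Sum>f'\<in>EE i. a f f' * h f f')" using each by simp
  also have "\<dots> = 0" by (rule skew_sum[OF fin_EE[OF i] ask hsym])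
  finally show ?thesis .
qed

lemma tt_swap: "tt f e e = tt e f f"
  unfolding tt_def using anti[of f e] by (simp add: Qf.lneg Qf.rneg)

definition "ci i = (SOME c. \<forall>x\<in>pp. \<forall>y\<in>pp. Ti i x y = c * Q x y)"

lemma ci_spec: "i < m \<Longrightarrow> x \<in> pp \<Longrightarrow> y \<in> pp \<Longrightarrow> Ti i x y = ci i * Q x y"
proof -
  assume i: "i < m" and x: "x \<in> pp" and y: "y \<in> pp"
  have "\<exists>c. \<forall>x\<in>pp. \<forall>y\<in>pp. Ti i x y = c * Q x y"
    by (rule schur[OF Ti_bil Ti_sym Ti_inv[OF i]])
  then have "\<forall>x\<in>pp. \<forall>y\<in>pp. Ti i x y = ci i * Q x y" unfolding ci_def by (rule someI_ex)
  then show ?thesis using x y by blast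
qed

lemma Ti_trace: "i < m \<Longrightarrow> (\<Sum>e\<in>Ep. Ti i e e) = real (dim (kk i)) * (1 - \<kappa> i)"
proof -
  assume i: "i < m"
  have "(\<Sum>e\<in>Ep. Ti i e e) = (\<Sum>f\<in>EE i. \<Sum>e\<in>Ep. tt e f f)"
    unfolding Ti_def by (subst sum.swap) (simp add: tt_swap)
  also have "\<dots> = (\<Sum>f\<in>EE i. (1 - \<kappa> i) * Q f f)"
    using tt_psum[OF i] EE_k[OF i] by simp
  also have "\<dots> = (\<Sum>f\<in>EE i. (1 - \<kappa> i))" using Qf.onb_norm[OF onb_k[OF i]] by simp
  also have "\<dots> = real (card (EE i)) * (1 - \<kappa> i)" by simp
  finally show ?thesis using Qf.onb_card[OF onb_k[OF i]] by simp
qed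

lemma ci_val: "i < m \<Longrightarrow> ci i = real (dim (kk i)) * (1 - \<kappa> i) / real (dim pp)"
proof -
  assume i: "i < m"
  have "(\<Sum>e\<in>Ep. Ti i e e) = (\<Sum>e\<in>Ep. ci i)"
    using ci_spec[OF i] Ep_p Qf.onb_norm[OF onb_p] by simp
  also have "\<dots> = ci i * real (dim pp)" using Qf.onb_card[OF onb_p] by simp
  finally have "ci i * real (dim pp) = real (dim (kk i)) * (1 - \<kappa> i)" using Ti_trace[OF i] by simp
  moreover have "real (dim pp) \<noteq> 0" using n_pos by linarith
  ultimately show ?thesis by (simp add: eq_divide_eq)
qed

lemma ST: "i < m \<Longrightarrow> X \<in> pp \<Longrightarrow> Y \<in> pp \<Longrightarrow>
   (\<Sum>e\<in>Ep. Q (Pk i (br e X)) (Pk i (br e Y))) = Ti i X Y"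
proof -
  assume i: "i < m" and X: "X \<in> pp" and Y: "Y \<in> pp"
  have sw: "Q (br e Z) f = Q (br f Z) e" if e: "e \<in> pp" and f: "f \<in> kp" for e f Z
  proof -
    have "Q (br e Z) f = Q Z (br e f)" by (rule Q_prule[OF e])
    also have "\<dots> = - Q Z (br f e)" using anti[of e f] by (simp add: Qf.rneg)
    also have "\<dots> = Q (br f Z) e" using Q_krule[OF f, of Z e] by simp
    finally show ?thesis .
  qed
  have "(\<Sum>e\<in>Ep. Q (Pk i (br e X)) (Pk i (br e Y))) = (\<Sum>e\<in>Ep. \<Sum>f\<in>EE i. Q (br e X) f * Q (br e Y) f)"
    using Q_Pk_Pk[OF i] by simp
  also have "\<dots> = (\<Sum>e\<in>Ep. \<Sum>f\<in>EE i. Q (br f X) e * Q (br f Y) e)"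
  proof (intro sum.cong refl)
    fix e f assume e: "e \<in> Ep" and f: "f \<in> EE i"
    show "Q (br e X) f * Q (br e Y) f = Q (br f X) e * Q (br f Y) e"
      using sw[OF Ep_p[OF e] EE_kp[OF i f], of X] sw[OF Ep_p[OF e] EE_kp[OF i f], of Y] by simp
  qed
  also have "\<dots> = (\<Sum>f\<in>EE i. \<Sum>e\<in>Ep. Q (br f X) e * Q (br f Y) e)" by (rule sum.swap)
  also have "\<dots> = (\<Sum>f\<in>EE i. Q (br f X) (br f Y))"
    using Qf.onb_Q_expand2[OF onb_p] br_kp[OF EE_kp[OF i] Y] by simp
  finally show ?thesis by (simp add: Ti_def tt_def)
qed

end

context msetting
begin

lemma ric_p:
  assumes X: "X \<in> pp" and Y: "Y \<in> pp"
  shows "ricci gm br X Y = - (\<Sum>i<m. (\<alpha> i / (2 * \<beta>) + 1) * (real (dim (kk i)) * (1 - \<kappa> i) / real (dim pp))) * Q X Y"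
proof -
  define coef where "coef i = 1 + 3 * \<alpha> i / (4 * \<beta>)" for i
  have A: "(\<Sum>e\<in>Ep. Q (curv gm br e X Y) e) = - (\<Sum>i<m. coef i * Ti i X Y)"
  proof -
    have "(\<Sum>e\<in>Ep. Q (curv gm br e X Y) e) =
        (\<Sum>e\<in>Ep. - (\<Sum>i<m. coef i * Q (Pk i (br e X)) (Pk i (br e Y))))"
      by (rule sum.cong[OF refl]) (simp add: RP_p[OF Ep_p X Y] coef_def)
    also have "\<dots> = - (\<Sum>i<m. \<Sum>e\<in>Ep. coef i * Q (Pk i (br e X)) (Pk i (br e Y)))"
      by (simp add: sum_negf sum.swap[of _ Ep])
    also have "\<dots> = - (\<Sum>i<m. coef i * Ti i X Y)"
      using ST[OF _ X Y] by (simp add: sum_distrib_left[symmetric])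
    finally show ?thesis .
  qed
  have B: "(\<Sum>l<m. \<Sum>e\<in>EE l. Q (curv gm br e X Y) e) = (\<Sum>l<m. \<alpha> l / (4 * \<beta>) * Ti l X Y)"
  proof (rule sum.cong[OF refl])
    fix l assume "l \<in> {..<m}"
    then have l: "l < m" by simp
    have "(\<Sum>e\<in>EE l. Q (curv gm br e X Y) e) = (\<Sum>e\<in>EE l. \<alpha> l / (4 * \<beta>) * tt e X Y)"
      using RP_k[OF l EE_k[OF l] X Y] by simp
    also have "\<dots> = \<alpha> l / (4 * \<beta>) * Ti l X Y" by (simp add: Ti_def sum_distrib_left)
    finally show "(\<Sum>e\<in>EE l. Q (curv gm br e X Y) e) = \<alpha> l / (4 * \<beta>) * Ti l X Y" .
  qed
  have "ricci gm br X Y = - (\<Sum>i<m. coef i * Ti i X Y) + (\<Sum>l<m. \<alpha> l / (4 * \<beta>) * Ti l X Y)"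
    using ricci_split A B by simp
  also have "\<dots> = (\<Sum>i<m. - ((\<alpha> i / (2 * \<beta>) + 1) * ci i) * Q X Y)"
    unfolding sum_negf[symmetric] sum.distrib[symmetric]
  proof (rule sum.cong[OF refl])
    fix i assume "i \<in> {..<m}"
    then have i: "i < m" by simp
    show "- (coef i * Ti i X Y) + \<alpha> i / (4 * \<beta>) * Ti i X Y = - ((\<alpha> i / (2 * \<beta>) + 1) * ci i) * Q X Y"
      using ci_spec[OF i X Y] beta_pos by (simp add: coef_def field_simps)
  qed
  also have "\<dots> = - (\<Sum>i<m. (\<alpha> i / (2 * \<beta>) + 1) * ci i) * Q X Y"
    by (simp add: sum_distrib_right sum_negf)
  also have "(\<Sum>i<m. (\<alpha> i / (2 * \<beta>) + 1) * ci i) =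
      (\<Sum>i<m. (\<alpha> i / (2 * \<beta>) + 1) * (real (dim (kk i)) * (1 - \<kappa> i) / real (dim pp)))"
    using ci_val by simp
  finally show ?thesis .
qed

lemma ric_k:
  assumes j: "j < m" and X: "X \<in> kk j" and Y: "Y \<in> kk j"
  shows "ricci gm br X Y = (1/4) * ((\<alpha> j)\<^sup>2 / \<beta>\<^sup>2 * (1 - \<kappa> j) + \<kappa> j) * Q X Y"
proof -
  have Xk: "X \<in> kp" and Yk: "Y \<in> kp" using brk[OF j] X Y by auto
  have A: "(\<Sum>e\<in>Ep. Q (curv gm br e X Y) e) = \<alpha> j * \<alpha> j / (4 * \<beta>\<^sup>2) * ((1 - \<kappa> j) * Q X Y)"
  proof -
    have "(\<Sum>e\<in>Ep. Q (curv gm br e X Y) e) = (\<Sum>e\<in>Ep. \<alpha> j * \<alpha> j / (4 * \<beta>\<^sup>2) * tt e X Y)"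
      by (rule sum.cong[OF refl]) (rule RK_p[OF j j Ep_p X Y])
    also have "\<dots> = \<alpha> j * \<alpha> j / (4 * \<beta>\<^sup>2) * (\<Sum>e\<in>Ep. tt e X Y)" by (simp add: sum_distrib_left)
    finally show ?thesis using tt_psum[OF j X Y] by simp
  qed
  have B: "(\<Sum>l<m. \<Sum>e\<in>EE l. Q (curv gm br e X Y) e) = (1/4) * (\<kappa> j * Q X Y)"
  proof -
    have "(\<Sum>l<m. \<Sum>e\<in>EE l. Q (curv gm br e X Y) e) = (\<Sum>l<m. \<Sum>e\<in>EE l. (1/4) * tt e X Y)"
    proof (intro sum.cong refl)
      fix l e assume "l \<in> {..<m}" "e \<in> EE l"
      then show "Q (curv gm br e X Y) e = (1/4) * tt e X Y" using RK_k[OF EE_kp[of l e] Xk Yk] by simp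
    qed
    also have "\<dots> = (1/4) * (\<Sum>l<m. \<Sum>e\<in>EE l. tt e X Y)" by (simp add: sum_distrib_left)
    finally show ?thesis using tt_ksum[OF j X Y] by simp
  qed
  show ?thesis using ricci_split A B beta_pos by (simp add: field_simps power2_eq_square)
qed

lemma ric_pk:
  assumes j: "j < m" and X: "X \<in> pp" and Y: "Y \<in> kk j"
  shows "ricci gm br X Y = 0"
proof -
  have Yk: "Y \<in> kp" using brk[OF j Y] .
  have "(\<Sum>e\<in>Ep. Q (curv gm br e X Y) e) = 0" using R_mixed[OF X Yk] Ep_p by simp
  moreover have "(\<Sum>l<m. \<Sum>e\<in>EE l. Q (curv gm br e X Y) e) = 0" using R_mixed[OF X Yk] EE_kp by simp
  ultimately show ?thesis using ricci_split by simp
qed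

lemma ric_kk:
  assumes j: "j < m" and k: "k < m" and jk: "j \<noteq> k" and X: "X \<in> kk j" and Y: "Y \<in> kk k"
  shows "ricci gm br X Y = 0"
proof -
  have Xk: "X \<in> kp" and Yk: "Y \<in> kp" using brk[OF j X] brk[OF k Y] by auto
  have "(\<Sum>e\<in>Ep. Q (curv gm br e X Y) e) = (\<Sum>e\<in>Ep. \<alpha> j * \<alpha> k / (4 * \<beta>\<^sup>2) * tt e X Y)"
    by (rule sum.cong[OF refl]) (rule RK_p[OF j k Ep_p X Y])
  also have "\<dots> = \<alpha> j * \<alpha> k / (4 * \<beta>\<^sup>2) * (\<Sum>e\<in>Ep. tt e X Y)" by (simp add: sum_distrib_left)
  also have "\<dots> = 0" using tt_psum0[OF j k jk X Y] by simp
  finally have A: "(\<Sum>e\<in>Ep. Q (curv gm br e X Y) e) = 0" .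
  have "(\<Sum>l<m. \<Sum>e\<in>EE l. Q (curv gm br e X Y) e) = (\<Sum>l<m. \<Sum>e\<in>EE l. (1/4) * tt e X Y)"
  proof (intro sum.cong refl)
    fix l e assume "l \<in> {..<m}" "e \<in> EE l"
    then show "Q (curv gm br e X Y) e = (1/4) * tt e X Y" using RK_k[OF EE_kp[of l e] Xk Yk] by simp
  qed
  also have "\<dots> = (1/4) * (\<Sum>l<m. \<Sum>e\<in>EE l. tt e X Y)" by (simp add: sum_distrib_left)
  also have "\<dots> = 0" using tt_ksum0[OF j k jk X Y] by simp
  finally show ?thesis using ricci_split A by simp
qed

end

theorem theorem3p6:
  fixes br :: "'a::euclidean_space \<Rightarrow> 'a \<Rightarrow> 'a"
    and \<theta> :: "'a \<Rightarrow> 'a"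
    and kk :: "nat \<Rightarrow> 'a set"
    and r s :: nat
    and \<kappa> :: "nat \<Rightarrow> real"
    and \<alpha> :: "nat \<Rightarrow> real"
    and \<beta> :: real
  assumes lie: "lie_bracket br"
    and simple: "simple_alg br UNIV"
    and noncompact: "\<not> (\<forall>X. X \<noteq> 0 \<longrightarrow> killing br X X < 0)"
    and cartan: "cartan_involution br \<theta>"
    and simple_ideals: "{I. simple_ideal_of br (derived_alg br (kpart \<theta>)) I} = kk ` {..<r}"
    and kk_inj: "inj_on kk {..<r}"
    and s_def: "s = (if centre br (kpart \<theta>) = {0} then 0 else 1)"
    and kk_centre: "s = 1 \<Longrightarrow> kk r = centre br (kpart \<theta>)"
    and kappa: "\<And>i X Y. i < r + s \<Longrightarrow> X \<in> kk i \<Longrightarrow> Y \<in> kk i \<Longrightarrow>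
                  killing_on br (kk i) X Y = \<kappa> i * killing br X Y"
    and beta_pos: "\<beta> > 0"
    and alpha_pos: "\<And>i. i < r + s \<Longrightarrow> \<alpha> i > 0"
  defines "Q \<equiv> Qform br \<theta>"
    and "p \<equiv> ppart \<theta>"
    and "n \<equiv> real (dim (ppart \<theta>))"
    and "d \<equiv> (\<lambda>i. real (dim (kk i)))"
    and "g \<equiv> (\<lambda>X Y. \<beta> * form_restr (Qform br \<theta>) (ppart \<theta>) X Y
                + (\<Sum>i<r + s. \<alpha> i * form_restr (Qform br \<theta>) (kk i) X Y))"
  shows "(\<forall>X\<in>p. \<forall>Y\<in>p. ricci g br X Y =
            - (\<Sum>i<r + s. (\<alpha> i / (2 * \<beta>) + 1) * (d i * (1 - \<kappa> i) / n)) * Q X Y)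
       \<and> (\<forall>j<r + s. \<forall>X\<in>kk j. \<forall>Y\<in>kk j. ricci g br X Y =
            (1/4) * ((\<alpha> j)\<^sup>2 / \<beta>\<^sup>2 * (1 - \<kappa> j) + \<kappa> j) * Q X Y)
       \<and> (\<forall>j<r + s. \<forall>X\<in>p. \<forall>Y\<in>kk j. ricci g br X Y = 0)
       \<and> (\<forall>j<r + s. \<forall>k<r + s. j \<noteq> k \<longrightarrow> (\<forall>X\<in>kk j. \<forall>Y\<in>kk k. ricci g br X Y = 0))"
proof -
  interpret M: msetting br \<theta> kk r s \<kappa> \<alpha> \<beta>
  proof unfold_locales
    show "lie_bracket br" by (rule lie)
    show "cartan_involution br \<theta>" by (rule cartan)
    show "simple_alg br UNIV" by (rule simple)
    show "\<not> (\<forall>X. X \<noteq> 0 \<longrightarrow> killing br X X < 0)" by (rule noncompact)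
    show "{I. simple_ideal_of br (derived_alg br (kpart \<theta>)) I} = kk ` {..<r}" by (rule simple_ideals)
    show "inj_on kk {..<r}" by (rule kk_inj)
    show "s = (if centre br (kpart \<theta>) = {0} then 0 else 1)" by (rule s_def)
    show "s = 1 \<Longrightarrow> kk r = centre br (kpart \<theta>)" by (rule kk_centre)
    show "\<And>i X Y. i < r + s \<Longrightarrow> X \<in> kk i \<Longrightarrow> Y \<in> kk i \<Longrightarrow>
                  killing_on br (kk i) X Y = \<kappa> i * killing br X Y" by (rule kappa)
    show "\<beta> > 0" by (rule beta_pos)
    show "\<And>i. i < r + s \<Longrightarrow> \<alpha> i > 0" by (rule alpha_pos)
  qed
  have g: "g = M.gm" unfolding g_def M.gm_def ..
  show ?thesis
    unfolding g Q_def p_def n_def d_def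
    using M.ric_p M.ric_k M.ric_pk M.ric_kk by auto
qed

end
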